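(* Let $[a,b]$ be a compact interval and $g:[a,b]\to\mathbb R$ a derivator with only finitely many discontinuity points in $[a,b]$. Then ${\rm P}_g$ is dense in $\mathrm{UC}_g([a,b])$ with respect to the supremum norm.
   Context: $\mathbb F\in\{\mathbb R,\mathbb C\}$. A derivator is a nondecreasing, left-continuous function $g:[a,b]\to\mathbb R$; $\mu_g$ is its Lebesgue–Stieltjes measure, characterized by $\mu_g([c,d))=g(d)-g(c)$ for $a\le c<d\le b$. For $x_0\in[a,b]$, the $g$-monomials centered at $x_0$ are $g_{x_0,0}\equiv1$ and recursively $g_{x_0,n}(x)=n\int_{[x_0,x)}g_{x_0,n-1}\,d\mu_g$ for $x\ge x_0$, $g_{x_0,n}(x)=-n\int_{[x,x_0)}g_{x_0,n-1}\,d\mu_g$ for $x<x_0$. A $g$-polynomial is a finite $\mathbb F$-linear combination of $g$-monomials; ${\rm P}_g$ is the space of $g$-polynomials (for any fixed $x_0$, $\{g_{x_0,n}\}_{n\ge0}$ spans ${\rm P}_g$). $\mathrm{UC}_g([a,b])$ is the Banach space, with the supremum norm, of uniformly $g$-continuous functions $f:[a,b]\to\mathbb F$: for every $\varepsilon>0$ there is $\delta>0$ such that $|g(x)-g(y)|<\delta$ implies $|f(x)-f(y)|<\varepsilon$ for all $x,y\in[a,b]$. *)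

theory Defs
  imports "HOL-Analysis.Analysis"
begin

definition derivator :: "real \<Rightarrow> real \<Rightarrow> (real \<Rightarrow> real) \<Rightarrow> bool" where
  "derivator a b g \<longleftrightarrow> mono_on {a..b} g \<and> (\<forall>x\<in>{a..b}. continuous (at x within {a..x}) g)"

text \<open>Extension of g outside [a,b] by constants (no mass outside [a,b]).\<close>
definition g_ext :: "real \<Rightarrow> real \<Rightarrow> (real \<Rightarrow> real) \<Rightarrow> real \<Rightarrow> real" where
  "g_ext a b g x = g (max a (min b x))"

text \<open>Lebesgue-Stieltjes measure of a left-continuous nondecreasing g, characterised by
  mu_g [c,d) = g d - g c; built by reflecting the (right-continuous) Stieltjes
  measure of x |-> - g(-x).\<close>
definition LS_measure :: "real \<Rightarrow> real \<Rightarrow> (real \<Rightarrow> real) \<Rightarrow> real measure" where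
  "LS_measure a b g = distr (interval_measure (\<lambda>x. - g_ext a b g (- x))) borel uminus"

primrec g_mono :: "real \<Rightarrow> real \<Rightarrow> (real \<Rightarrow> real) \<Rightarrow> real \<Rightarrow> nat \<Rightarrow> real \<Rightarrow> real" where
  "g_mono a b g x0 0 = (\<lambda>x. 1)"
| "g_mono a b g x0 (Suc n) = (\<lambda>x.
     if x0 \<le> x then real (Suc n) * (\<integral>t\<in>{x0..<x}. g_mono a b g x0 n t \<partial>LS_measure a b g)
     else - real (Suc n) * (\<integral>t\<in>{x..<x0}. g_mono a b g x0 n t \<partial>LS_measure a b g))"

definition g_polys :: "real \<Rightarrow> real \<Rightarrow> (real \<Rightarrow> real) \<Rightarrow> (real \<Rightarrow> 'a::real_normed_field) set" where
  "g_polys a b g = {p. \<exists>S c. finite S \<and> S \<subseteq> {a..b} \<times> UNIV \<and>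
      p = (\<lambda>x. \<Sum>(x0, n)\<in>S. c (x0, n) * of_real (g_mono a b g x0 n x))}"

definition UC_g :: "real \<Rightarrow> real \<Rightarrow> (real \<Rightarrow> real) \<Rightarrow> (real \<Rightarrow> 'a::real_normed_vector) set" where
  "UC_g a b g = {f. \<forall>\<epsilon>>0. \<exists>\<delta>>0. \<forall>x\<in>{a..b}. \<forall>y\<in>{a..b}.
      \<bar>g x - g y\<bar> < \<delta> \<longrightarrow> norm (f x - f y) < \<epsilon>}"

end

theory Submission
  imports Defs
begin


lemma int_ind_bound:
  fixes M :: "real measure" and h :: "real \<Rightarrow> real"
  assumes fin: "finite_measure M" and sets: "sets M = sets borel"
    and hm: "h \<in> borel_measurable borel" and A: "A \<in> sets borel"
    and bnd: "\<And>x. x \<in> A \<Longrightarrow> \<bar>h x\<bar> \<le> B"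
  shows "integrable M (\<lambda>t. indicator A t * h t)"
    and "\<bar>\<integral>t. indicator A t * h t \<partial>M\<bar> \<le> B * measure M A"
proof -
  have hm': "h \<in> borel_measurable M" using hm by (subst measurable_cong_sets[OF sets refl])
  have A': "A \<in> sets M" using A sets by simp
  have fA: "emeasure M A < \<infinity>"
    using finite_measure.emeasure_finite[OF fin, of A] by (simp add: less_top)
  have ae: "AE x in M. x \<in> A \<longrightarrow> norm (h x) \<le> B" using bnd by (intro AE_I2) auto
  show int: "integrable M (\<lambda>t. indicator A t * h t)"
    using integrableI_bounded_set_indicator[OF A' hm' fA ae] by simp
  have int1: "integrable M (indicator A :: real \<Rightarrow> real)"
    by (rule integrable_real_indicator[OF A' fA])
  have int2: "integrable M (\<lambda>t. indicator A t * B)"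
    by (rule integrable_mult_left[OF int1])
  have "\<bar>\<integral>t. indicator A t * h t \<partial>M\<bar> \<le> (\<integral>t. \<bar>indicator A t * h t\<bar> \<partial>M)"
    by (rule integral_abs_bound)
  also have "\<dots> \<le> (\<integral>t. indicator A t * B \<partial>M)"
  proof (rule integral_mono[OF integrable_abs[OF int] int2])
    fix t show "\<bar>indicator A t * h t\<bar> \<le> indicator A t * B"
      using bnd[of t] by (cases "t \<in> A") auto
  qed
  also have "\<dots> = B * measure M A"
    using sets.Int_space_eq2[OF A'] by simp
  finally show "\<bar>\<integral>t. indicator A t * h t \<partial>M\<bar> \<le> B * measure M A" .
qed

locale LSd =
  fixes a b :: real and g :: "real \<Rightarrow> real"
  assumes der: "derivator a b g" and ab: "a \<le> b"
begin

abbreviation "G \<equiv> g_ext a b g"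
abbreviation "mu \<equiv> LS_measure a b g"
abbreviation "gm \<equiv> g_mono a b g a"

lemma g_mono_on: "mono_on {a..b} g" using der by (simp add: derivator_def)

lemma G_mono: "x \<le> y \<Longrightarrow> G x \<le> G y"
  unfolding g_ext_def using ab by (intro mono_onD[OF g_mono_on]) auto

lemma G_eq: "x \<in> {a..b} \<Longrightarrow> G x = g x" by (simp add: g_ext_def)
lemma G_left: "x \<le> a \<Longrightarrow> G x = g a" using ab by (simp add: g_ext_def)
lemma G_right: "b \<le> x \<Longrightarrow> G x = g b" using ab by (simp add: g_ext_def)
lemma G_ge: "g a \<le> G x" using G_mono[of "min a x" x] G_left[of "min a x"] by simp
lemma G_le: "G x \<le> g b" using G_mono[of x "max b x"] G_right[of "max b x"] by simp

lemma G_left_cont: "continuous (at_left x) G"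
proof -
  consider "x \<le> a" | "a < x" "x \<le> b" | "b < x" by linarith
  then show ?thesis
  proof cases
    case 1
    have "\<forall>\<^sub>F y in at_left x. G y = G x"
      by (rule eventually_at_leftI[of "x - 1"]) (use 1 in \<open>auto simp: G_left\<close>)
    then show ?thesis unfolding continuous_within by (rule tendsto_eventually)
  next
    case 2
    have c: "continuous (at x within {a..x}) g" using der 2 by (auto simp: derivator_def)
    have e: "at_left x = at x within {a<..<x}"
    proof (rule at_within_nhd[of _ "{a<..}"])
      show "{..<x} \<inter> {a<..} - {x} = {a<..<x} \<inter> {a<..} - {x}" by auto
    qed (use 2 in auto)
    have "(g \<longlongrightarrow> g x) (at x within {a<..<x})"
      using c unfolding continuous_within by (rule tendsto_within_subset) auto
    moreover have "\<forall>\<^sub>F y in at x within {a<..<x}. G y = g y"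
      unfolding eventually_at_filter using 2 by (intro always_eventually) (auto simp: G_eq)
    ultimately have "(G \<longlongrightarrow> g x) (at x within {a<..<x})"
      using tendsto_cong[of G g "at x within {a<..<x}" "g x"] by simp
    then show ?thesis unfolding continuous_within e using 2 by (simp add: G_eq)
  next
    case 3
    have "\<forall>\<^sub>F y in at_left x. G y = G x"
      by (rule eventually_at_leftI[of "b"]) (use 3 in \<open>auto simp: G_right\<close>)
    then show ?thesis unfolding continuous_within by (rule tendsto_eventually)
  qed
qed

definition "Fm x = - G (- x)"

lemma Fm_mono: "x \<le> y \<Longrightarrow> Fm x \<le> Fm y" unfolding Fm_def using G_mono by simp

lemma Fm_rc: "continuous (at_right x) Fm"
proof -
  have "(G \<longlongrightarrow> G x) (at_left x)" for x using G_left_cont[of x] by (simp add: continuous_within)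
  then have "((\<lambda>y. - G y) \<longlongrightarrow> - G (- x)) (at_left (- x))" by (intro tendsto_minus) 
  then have "((\<lambda>y. - G (- y)) \<longlongrightarrow> - G (- x)) (at_right x)"
    unfolding at_right_minus[of x] filterlim_filtermap by simp
  then show ?thesis unfolding continuous_within Fm_def by simp
qed

lemma sets_mu[simp, measurable_cong]: "sets mu = sets borel"
  by (simp add: LS_measure_def)
lemma space_mu[simp]: "space mu = UNIV"
  by (simp add: LS_measure_def)

lemma mu_Ico: assumes "c \<le> e" shows "emeasure mu {c..<e} = ennreal (G e - G c)"
proof -
  have "emeasure mu {c..<e} = emeasure (interval_measure Fm) (uminus -` {c..<e})"
  proof -
    have m: "(uminus::real\<Rightarrow>real) \<in> measurable (interval_measure Fm) borel"
      by (subst measurable_cong_sets[OF sets_interval_measure refl]) measurable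
    show ?thesis unfolding LS_measure_def Fm_def[symmetric]
      by (subst emeasure_distr[OF m]) auto
  qed
  also have "uminus -` {c..<e} = {-e<..-c}" by auto
  also have "emeasure (interval_measure Fm) {-e<..-c} = Fm (-c) - Fm (-e)"
    using assms by (intro emeasure_interval_measure_Ioc Fm_mono Fm_rc) auto
  finally show ?thesis by (simp add: Fm_def)
qed

lemma mu_lessThan: "emeasure mu {..<x} = ennreal (G x - g a)"
proof -
  have inc: "incseq (\<lambda>n::nat. {x - real n..<x})" by (auto simp: incseq_def)
  have U: "(\<Union>n::nat. {x - real n..<x}) = {..<x}"
  proof safe
    fix y assume "y < x"
    obtain n::nat where "x - y \<le> real n" using real_arch_simple by blast
    then show "y \<in> (\<Union>n::nat. {x - real n..<x})" using \<open>y < x\<close> by (intro UN_I[of n]) auto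
  qed auto
  have r: "range (\<lambda>n::nat. {x - real n..<x}) \<subseteq> sets mu" by auto
  have "emeasure mu {..<x} = (SUP n::nat. emeasure mu {x - real n..<x})"
    using SUP_emeasure_incseq[OF r inc] U by simp
  also have "\<dots> = (SUP n::nat. ennreal (G x - G (x - real n)))"
    by (simp add: mu_Ico)
  also have "\<dots> = ennreal (G x - g a)"
  proof (rule antisym)
    show "(SUP n::nat. ennreal (G x - G (x - real n))) \<le> ennreal (G x - g a)"
      using G_ge by (intro SUP_least ennreal_leI) auto
    obtain n::nat where n: "x - a \<le> real n" using real_arch_simple by blast
    have "ennreal (G x - g a) = ennreal (G x - G (x - real n))" using n by (simp add: G_left)
    also have "\<dots> \<le> (SUP n::nat. ennreal (G x - G (x - real n)))" by (rule SUP_upper) auto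
    finally show "ennreal (G x - g a) \<le> (SUP n::nat. ennreal (G x - G (x - real n)))" .
  qed
  finally show ?thesis .
qed

lemma mu_finite: "finite_measure mu"
proof (rule finite_measureI)
  have inc: "incseq (\<lambda>n::nat. {..<real n})" by (auto simp: incseq_def)
  have U: "(\<Union>n::nat. {..<real n}) = UNIV"
  proof safe
    fix y :: real obtain n::nat where "y < real n" using reals_Archimedean2 by blast
    then show "y \<in> (\<Union>n::nat. {..<real n})" by (intro UN_I[of n]) auto
  qed auto
  have r: "range (\<lambda>n::nat. {..<real n}) \<subseteq> sets mu" by auto
  have "emeasure mu UNIV = (SUP n::nat. emeasure mu {..<real n})"
    using SUP_emeasure_incseq[OF r inc] U by simp
  also have "\<dots> \<le> ennreal (g b - g a)"
    using G_le by (intro SUP_least) (auto simp: mu_lessThan intro!: ennreal_leI)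
  finally show "emeasure mu (space mu) \<noteq> \<infinity>" by (auto simp: top_unique)
qed

lemma mu_Ico_real: "c \<le> e \<Longrightarrow> measure mu {c..<e} = G e - G c"
  by (simp add: measure_def mu_Ico G_mono)

lemma emeasure_mu_fin: "emeasure mu A \<noteq> top"
  using finite_measure.emeasure_finite[OF mu_finite] by simp

lemma mint: fixes h :: "real \<Rightarrow> real" assumes "h \<in> borel_measurable borel" "A \<in> sets borel" "\<And>x. x \<in> A \<Longrightarrow> \<bar>h x\<bar> \<le> B"
  shows "integrable mu (\<lambda>t. indicator A t * h t)"
  using int_ind_bound(1)[OF mu_finite sets_mu assms] .

lemma mbound: fixes h :: "real \<Rightarrow> real" assumes "h \<in> borel_measurable borel" "A \<in> sets borel" "\<And>x. x \<in> A \<Longrightarrow> \<bar>h x\<bar> \<le> B"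
  shows "\<bar>\<integral>t. indicator A t * h t \<partial>mu\<bar> \<le> B * measure mu A"
  using int_ind_bound(2)[OF mu_finite sets_mu assms] .

end



lemma measure_eqI_Iio:
  fixes M N :: "real measure"
  assumes sets: "sets M = sets borel" "sets N = sets borel"
  assumes fin: "\<And>x. emeasure M {..<x} < \<infinity>"
  assumes eq: "\<And>x. emeasure M {..<x} = emeasure N {..<x}"
  shows "M = N"
proof (rule measure_eqI_generator_eq_countable)
  let ?LT = "\<lambda>a::real. {..< a}" let ?E = "range ?LT"
  show "Int_stable ?E"
  proof (rule Int_stableI)
    fix A B assume "A \<in> ?E" "B \<in> ?E"
    then obtain x y where "A = {..<x}" "B = {..<y}" by auto
    then show "A \<inter> B \<in> ?E" by (intro image_eqI[of _ _ "min x y"]) auto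
  qed
  show "?E \<subseteq> Pow UNIV" "sets M = sigma_sets UNIV ?E" "sets N = sigma_sets UNIV ?E"
    unfolding sets borel_Iio by auto
  show "?LT`Rats \<subseteq> ?E" by auto
  show "\<And>a. a \<in> ?LT`Rats \<Longrightarrow> emeasure M a \<noteq> \<infinity>"
    using fin by (auto simp: less_top)
  show "(\<Union>i\<in>Rats. ?LT i) = UNIV"
  proof safe
    fix y :: real
    obtain q where "q \<in> \<rat>" "y < q" "q < y + 1" using Rats_dense_in_real[of y "y+1"] by auto
    then show "y \<in> (\<Union>i\<in>Rats. ?LT i)" by auto
  qed auto
qed (auto intro: assms countable_rat)

context LSd begin

lemma G_meas[measurable]: "G \<in> borel_measurable borel"
  by (rule borel_measurable_mono) (auto simp: mono_def G_mono)

lemma gab: "g a \<le> g b" using G_le[of a] G_left[of a] by simp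

definition "V h x = (\<integral>t. indicator {a..<x} t * h t \<partial>mu)"

lemma null_int: fixes h :: "real \<Rightarrow> real"
  assumes "emeasure mu A = 0" "A \<in> sets borel"
  shows "(\<integral>t. indicator A t * h t \<partial>mu) = 0"
proof -
  have "A \<in> null_sets mu" using assms by (simp add: null_sets_def)
  then have "AE t in mu. t \<notin> A" by (rule AE_not_in)
  then have "AE t in mu. indicator A t * h t = 0" by eventually_elim simp
  then show ?thesis by (simp add: integral_eq_zero_AE)
qed

lemma gm_Suc: "gm (Suc n) x = (if a \<le> x then real (Suc n) * V (gm n) x else 0)"
proof (cases "a \<le> x")
  case True then show ?thesis by (simp add: V_def set_lebesgue_integral_def)
next
  case False
  have "emeasure mu {x..<a} = 0" using False by (simp add: mu_Ico G_left)
  then have "(\<integral>t. indicator {x..<a} t * gm n t \<partial>mu) = 0" by (intro null_int) auto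
  then show ?thesis using False by (simp add: set_lebesgue_integral_def)
qed

declare g_mono.simps(2)[simp del]

lemma V_diff: fixes h :: "real \<Rightarrow> real"
  assumes hm: "h \<in> borel_measurable borel" and hb: "\<And>t. \<bar>h t\<bar> \<le> B" and xy: "a \<le> x" "x \<le> y"
  shows "V h y - V h x = (\<integral>t. indicator {x..<y} t * h t \<partial>mu)"
proof -
  have i1: "integrable mu (\<lambda>t. indicator {a..<y} t * h t)" by (rule mint[OF hm _ hb]) auto
  have i2: "integrable mu (\<lambda>t. indicator {a..<x} t * h t)" by (rule mint[OF hm _ hb]) auto
  have "V h y - V h x = (\<integral>t. indicator {a..<y} t * h t - indicator {a..<x} t * h t \<partial>mu)"
    unfolding V_def by (rule Bochner_Integration.integral_diff[OF i1 i2, symmetric])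
  also have "\<dots> = (\<integral>t. indicator {x..<y} t * h t \<partial>mu)"
    using xy by (intro Bochner_Integration.integral_cong) (auto simp: indicator_def)
  finally show ?thesis .
qed

lemma V_bound: fixes h :: "real \<Rightarrow> real"
  assumes hm: "h \<in> borel_measurable borel" and hb: "\<And>t. \<bar>h t\<bar> \<le> B"
  shows "\<bar>V h x\<bar> \<le> B * (g b - g a)"
proof -
  have B0: "0 \<le> B" using hb[of 0] by simp
  have "\<bar>V h x\<bar> \<le> B * measure mu {a..<x}" unfolding V_def by (rule mbound[OF hm _ hb]) auto
  also have "measure mu {a..<x} \<le> g b - g a"
  proof (cases "a \<le> x")
    case True then show ?thesis using G_le[of x] by (simp add: mu_Ico_real G_left)
  next
    case False then show ?thesis using G_le[of a] G_ge[of a] by simp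
  qed
  then have "B * measure mu {a..<x} \<le> B * (g b - g a)" using B0 by (rule mult_left_mono)
  finally show ?thesis .
qed

lemma gm_props: "mono (gm n) \<and> (\<forall>x. 0 \<le> gm n x) \<and> (\<exists>B. \<forall>x. gm n x \<le> B)"
proof (induction n)
  case 0 then show ?case by (auto simp: mono_def)
next
  case (Suc n)
  then obtain B where mo: "mono (gm n)" and nn: "\<And>x. 0 \<le> gm n x" and bd: "\<And>x. gm n x \<le> B" by auto
  have hm: "gm n \<in> borel_measurable borel" using mo by (rule borel_measurable_mono)
  have ab: "\<And>t. \<bar>gm n t\<bar> \<le> B" using nn bd by (simp add: abs_of_nonneg)
  have B0: "0 \<le> B" using nn[of 0] bd[of 0] by simp
  have Vnn: "0 \<le> V (gm n) x" for x unfolding V_def using nn by (intro integral_nonneg_AE) auto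
  have Vmono: "V (gm n) x \<le> V (gm n) y" if "a \<le> x" "x \<le> y" for x y
  proof -
    have "V (gm n) y - V (gm n) x = (\<integral>t. indicator {x..<y} t * gm n t \<partial>mu)"
      by (rule V_diff[OF hm ab that])
    also have "\<dots> \<ge> 0" using nn by (intro integral_nonneg_AE) auto
    finally show ?thesis by simp
  qed
  have Vb: "V (gm n) x \<le> B * (g b - g a)" for x using V_bound[OF hm ab, of x] by simp
  show ?case
  proof (intro conjI)
    show "mono (gm (Suc n))"
    proof (rule monoI)
      fix x y :: real assume "x \<le> y"
      then show "gm (Suc n) x \<le> gm (Suc n) y"
        unfolding gm_Suc using Vmono[of x y] Vnn[of y]
        by (auto intro!: mult_left_mono)
    qed
    show "\<forall>x. 0 \<le> gm (Suc n) x" unfolding gm_Suc using Vnn by auto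
    show "\<exists>B. \<forall>x. gm (Suc n) x \<le> B"
      using Vb Vnn B0 by (intro exI[of _ "real (Suc n) * (B * (g b - g a))"])
        (auto simp: gm_Suc gab intro!: mult_left_mono mult_nonneg_nonneg)
  qed
qed

lemma gm_meas[measurable]: "gm n \<in> borel_measurable borel"
  using gm_props[of n] by (intro borel_measurable_mono) auto

lemma gm_nonneg: "0 \<le> gm n x" using gm_props[of n] by auto

lemma gm_bnd: "\<exists>B. \<forall>x. \<bar>gm n x\<bar> \<le> B"
  using gm_props[of n] gm_nonneg by (auto simp: abs_of_nonneg)

lemma gm_lip: "\<exists>C. \<forall>x y. x \<le> y \<longrightarrow> \<bar>gm n y - gm n x\<bar> \<le> C * (G y - G x)"
proof (cases n)
  case 0 then show ?thesis by (auto intro!: exI[of _ 0])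
next
  case (Suc m)
  obtain B where B: "\<And>t. \<bar>gm m t\<bar> \<le> B" using gm_bnd by blast
  have B0: "0 \<le> B" using B[of 0] by simp
  have key: "\<bar>gm n y - gm n x\<bar> \<le> real (Suc m) * B * (G y - G x)" if "a \<le> x" "x \<le> y" for x y
  proof -
    have "gm n y - gm n x = real (Suc m) * (V (gm m) y - V (gm m) x)"
      using that Suc by (simp add: gm_Suc algebra_simps)
    also have "V (gm m) y - V (gm m) x = (\<integral>t. indicator {x..<y} t * gm m t \<partial>mu)"
      by (rule V_diff[OF gm_meas B that])
    finally have "\<bar>gm n y - gm n x\<bar> = real (Suc m) * \<bar>\<integral>t. indicator {x..<y} t * gm m t \<partial>mu\<bar>"
      by (simp add: abs_mult)
    also have "\<dots> \<le> real (Suc m) * (B * measure mu {x..<y})"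
      by (intro mult_left_mono mbound[OF gm_meas _ B]) auto
    finally show ?thesis using that by (simp add: mu_Ico_real)
  qed
  show ?thesis
  proof (intro exI allI impI)
    fix x y :: real assume xy: "x \<le> y"
    consider "y < a" | "x < a" "a \<le> y" | "a \<le> x" by linarith
    then show "\<bar>gm n y - gm n x\<bar> \<le> real (Suc m) * B * (G y - G x)"
    proof cases
      case 1 then show ?thesis using Suc xy by (simp add: gm_Suc G_left)
    next
      case 2
      have "gm n x = gm n a" using 2 Suc by (simp add: gm_Suc V_def)
      moreover have "G x = G a" using 2 by (simp add: G_left)
      ultimately show ?thesis using key[of a y] 2 by simp
    next
      case 3 then show ?thesis using key xy by simp
    qed
  qed
qed

end



context LSd begin

lemma G_cont_on: assumes "continuous_on {c..e} g" "a \<le> c" "e \<le> b"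
  shows "continuous_on {c..e} G"
  using assms(1) by (rule continuous_on_eq) (use assms in \<open>auto simp: G_eq\<close>)

lemma CV:
  fixes Phi Psi :: "real \<Rightarrow> real"
  assumes cont: "continuous_on {c..x} g" and ac: "a \<le> c" and xb: "x \<le> b" and cx: "c \<le> x"
    and Phic: "continuous_on UNIV Phi"
    and Psid: "\<And>s. s \<in> {G c..G x} \<Longrightarrow> (Psi has_real_derivative Phi s) (at s within {G c..G x})"
  shows "(\<integral>t. indicator {c..<x} t * Phi (G t) \<partial>mu) = Psi (G x) - Psi (G c)"
proof -
  let ?D = "density mu (\<lambda>t. ennreal (indicator {c..<x} t))"
  let ?N = "distr ?D borel G"
  let ?L = "density lborel (\<lambda>s. ennreal (indicator {G c..<G x} s))"
  have Gcx: "G c \<le> G x" using G_mono cx by simp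
  have contG: "continuous_on {c..x} G" by (rule G_cont_on[OF cont ac xb])
  have Phim[measurable]: "Phi \<in> borel_measurable borel"
    using Phic by (rule borel_measurable_continuous_onI)
  have emD: "emeasure ?D A = emeasure mu (A \<inter> {c..<x})" if [measurable]: "A \<in> sets borel" for A
  proof -
    have "emeasure ?D A = (\<integral>\<^sup>+ t. ennreal (indicator {c..<x} t) * indicator A t \<partial>mu)"
      by (rule emeasure_density) auto
    also have "\<dots> = (\<integral>\<^sup>+ t. indicator (A \<inter> {c..<x}) t \<partial>mu)"
      by (intro nn_integral_cong) (auto simp: indicator_def)
    also have "\<dots> = emeasure mu (A \<inter> {c..<x})" by (intro nn_integral_indicator) auto
    finally show ?thesis .
  qed
  have emL: "emeasure ?L A = emeasure lborel (A \<inter> {G c..<G x})" if [measurable]: "A \<in> sets borel" for A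
  proof -
    have "emeasure ?L A = (\<integral>\<^sup>+ t. ennreal (indicator {G c..<G x} t) * indicator A t \<partial>lborel)"
      by (rule emeasure_density) auto
    also have "\<dots> = (\<integral>\<^sup>+ t. indicator (A \<inter> {G c..<G x}) t \<partial>lborel)"
      by (intro nn_integral_cong) (auto simp: indicator_def)
    also have "\<dots> = emeasure lborel (A \<inter> {G c..<G x})" by (intro nn_integral_indicator) auto
    finally show ?thesis .
  qed
  have cnt: "emeasure ?L {..<s} = emeasure ?N {..<s}" for s
  proof -
    have Gm: "G \<in> measurable ?D borel" by simp
    have pre: "G -` {..<s} \<in> sets borel" using measurable_sets[OF G_meas, of "{..<s}"] by simp
    have "emeasure ?N {..<s} = emeasure ?D (G -` {..<s} \<inter> space ?D)"
      by (rule emeasure_distr[OF Gm]) simp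
    also have "\<dots> = emeasure mu (G -` {..<s} \<inter> {c..<x})"
      using emD[OF pre] by simp
    finally have N: "emeasure ?N {..<s} = emeasure mu (G -` {..<s} \<inter> {c..<x})" .
    have L: "emeasure ?L {..<s} = emeasure lborel ({..<s} \<inter> {G c..<G x})" by (rule emL) auto
    consider "s \<le> G c" | "G x < s" | "G c < s" "s \<le> G x" by linarith
    then show ?thesis
    proof cases
      case 1
      have "G -` {..<s} \<inter> {c..<x} = {}"
      proof -
        have "\<not> G t < s" if "c \<le> t" for t using G_mono[OF that] 1 by linarith
        then show ?thesis by auto
      qed
      moreover have "{..<s} \<inter> {G c..<G x} = {}" using 1 by auto
      ultimately show ?thesis using N L by simp
    next
      case 2
      have "G -` {..<s} \<inter> {c..<x} = {c..<x}"
      proof -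
        have "G t < s" if "t < x" for t using G_mono[of t x] that 2 by linarith
        then show ?thesis by auto
      qed
      moreover have "{..<s} \<inter> {G c..<G x} = {G c..<G x}" using 2 by auto
      ultimately show ?thesis using N L Gcx cx by (simp add: mu_Ico)
    next
      case 3
      let ?S = "{t \<in> {c..x}. G t = s}"
      obtain t0 where t0: "c \<le> t0" "t0 \<le> x" "G t0 = s"
        using IVT'[of G c s x] 3 cx contG by auto
      have cl: "closed ?S" by (rule continuous_closed_preimage_constant[OF contG]) auto
      have ne: "?S \<noteq> {}" using t0 by auto
      have bb: "bdd_below ?S" by (auto intro!: bdd_belowI[of _ c])
      define \<sigma> where "\<sigma> = Inf ?S"
      have sS: "\<sigma> \<in> ?S" unfolding \<sigma>_def by (rule closed_contains_Inf[OF ne bb cl])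
      have low: "\<sigma> \<le> t" if "t \<in> ?S" for t unfolding \<sigma>_def by (rule cInf_lower[OF that bb])
      have E1: "t \<in> {c..<\<sigma>}" if t: "t \<in> G -` {..<s} \<inter> {c..<x}" for t
      proof -
        have "t < \<sigma>"
        proof (rule ccontr)
          assume "\<not> t < \<sigma>"
          then have "G \<sigma> \<le> G t" using G_mono by simp
          then show False using sS t by auto
        qed
        then show ?thesis using t by auto
      qed
      have E2: "t \<in> G -` {..<s} \<inter> {c..<x}" if t: "t \<in> {c..<\<sigma>}" for t
      proof -
        have "G t \<le> s" using G_mono[of t \<sigma>] sS t by auto
        moreover have "G t \<noteq> s"
        proof
          assume "G t = s"
          then have "t \<in> ?S" using t sS by auto
          then show False using low[of t] t by auto
        qed
        ultimately show ?thesis using t sS by auto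
      qed
      have E: "G -` {..<s} \<inter> {c..<x} = {c..<\<sigma>}" using E1 E2 by blast
      have "{..<s} \<inter> {G c..<G x} = {G c..<s}" using 3 by auto
      then show ?thesis using N L E sS 3 by (simp add: mu_Ico)
    qed
  qed
  have NL: "?L = ?N"
  proof (rule measure_eqI_Iio)
    show "sets ?L = sets borel" "sets ?N = sets borel" by auto
    show "emeasure ?L {..<s} < \<infinity>" for s
    proof -
      have "emeasure ?L {..<s} \<le> emeasure lborel {G c..<G x}"
        by (subst emL) (auto intro!: emeasure_mono)
      also have "\<dots> < \<infinity>" using Gcx by simp
      finally show ?thesis .
    qed
  qed (rule cnt)
  have "(\<integral>t. indicator {c..<x} t * Phi (G t) \<partial>mu) = (\<integral>t. Phi (G t) \<partial>?D)"
    by (subst integral_density) auto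
  also have "\<dots> = (\<integral>s. Phi s \<partial>?N)"
    by (subst integral_distr) auto
  also have "\<dots> = (\<integral>s. Phi s \<partial>?L)" using NL by simp
  also have "\<dots> = (\<integral>s. indicator {G c..<G x} s * Phi s \<partial>lborel)"
    by (subst integral_density) auto
  also have "\<dots> = (LBINT s=G c..G x. Phi s)"
    using Gcx by (simp add: interval_integral_Ico set_lebesgue_integral_def)
  also have "\<dots> = Psi (G x) - Psi (G c)"
  proof (rule interval_integral_FTC_finite)
    show "continuous_on {min (G c) (G x)..max (G c) (G x)} Phi"
      using Phic by (rule continuous_on_subset) auto
    fix s assume "min (G c) (G x) \<le> s" "s \<le> max (G c) (G x)"
    then show "(Psi has_vector_derivative Phi s) (at s within {min (G c) (G x)..max (G c) (G x)})"
      using Psid[of s] Gcx by (simp add: has_real_derivative_iff_has_vector_derivative min_def max_def)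
  qed
  finally show ?thesis .
qed

end



context LSd begin

definition approx :: "(real \<Rightarrow> real) \<Rightarrow> bool" where
  "approx f \<longleftrightarrow> (\<forall>\<epsilon>>0. \<exists>c N. \<forall>x\<in>{a..b}. \<bar>f x - (\<Sum>n<N. c n * gm n x)\<bar> < \<epsilon>)"

definition UCr :: "(real \<Rightarrow> real) \<Rightarrow> bool" where
  "UCr f \<longleftrightarrow> (\<forall>\<epsilon>>0. \<exists>\<delta>>0. \<forall>x\<in>{a..b}. \<forall>y\<in>{a..b}. \<bar>g x - g y\<bar> < \<delta> \<longrightarrow> \<bar>f x - f y\<bar> < \<epsilon>)"

lemma g_mono_le: "x \<in> {a..b} \<Longrightarrow> y \<in> {a..b} \<Longrightarrow> x \<le> y \<Longrightarrow> g x \<le> g y"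
  using G_mono[of x y] by (simp add: G_eq)

lemma gm_pow: assumes cont: "continuous_on {a..b} g" and x: "x \<in> {a..b}"
  shows "gm n x = (g x - g a) ^ n"
  using x
proof (induction n arbitrary: x)
  case 0 then show ?case by simp
next
  case (Suc n)
  have "gm (Suc n) x = real (Suc n) * (\<integral>t. indicator {a..<x} t * gm n t \<partial>mu)"
    using Suc.prems by (simp add: gm_Suc V_def)
  also have "(\<integral>t. indicator {a..<x} t * gm n t \<partial>mu) = (\<integral>t. indicator {a..<x} t * (G t - g a) ^ n \<partial>mu)"
    using Suc.prems by (intro Bochner_Integration.integral_cong refl)
      (auto simp: indicator_def Suc.IH G_eq)
  also have "\<dots> = (G x - g a) ^ Suc n / real (Suc n) - (G a - g a) ^ Suc n / real (Suc n)"
  proof (rule CV)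
    show "continuous_on {a..x} g" using cont by (rule continuous_on_subset) (use Suc.prems in auto)
    show "continuous_on UNIV (\<lambda>s. (s - g a) ^ n)" by (intro continuous_intros)
    fix s show "((\<lambda>s. (s - g a) ^ Suc n / real (Suc n)) has_real_derivative (s - g a) ^ n) (at s within {G a..G x})"
      by (auto intro!: derivative_eq_intros simp del: of_nat_Suc) (cases n; simp add: field_simps)
  qed (use Suc.prems in auto)
  finally show ?case using Suc.prems by (simp add: G_eq G_left)
qed

lemma factor: assumes cont: "continuous_on {a..b} g" and f: "UCr f"
  shows "\<exists>F. continuous_on {g a..g b} F \<and> (\<forall>x\<in>{a..b}. f x = F (g x))"
proof -
  have ex: "\<exists>x. x \<in> {a..b} \<and> g x = s" if "s \<in> {g a..g b}" for s
    using IVT'[of g a s b] that cont ab by auto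
  define F where "F s = f (SOME x. x \<in> {a..b} \<and> g x = s)" for s
  have same: "f x = f y" if "x \<in> {a..b}" "y \<in> {a..b}" "g x = g y" for x y
  proof (rule ccontr)
    assume ne: "f x \<noteq> f y"
    define d where "d = \<bar>f x - f y\<bar>"
    then have "d > 0" using ne by simp
    then obtain \<delta> where "\<delta> > 0" "\<forall>x\<in>{a..b}. \<forall>y\<in>{a..b}. \<bar>g x - g y\<bar> < \<delta> \<longrightarrow> \<bar>f x - f y\<bar> < d"
      using f unfolding UCr_def by blast
    then show False using that d_def by force
  qed
  have Fg: "F (g x) = f x" if "x \<in> {a..b}" for x
  proof -
    have "(SOME y. y \<in> {a..b} \<and> g y = g x) \<in> {a..b} \<and> g (SOME y. y \<in> {a..b} \<and> g y = g x) = g x"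
      by (rule someI[of _ x]) (use that in auto)
    then show ?thesis unfolding F_def using same that by metis
  qed
  have "continuous_on {g a..g b} F"
    unfolding continuous_on_iff
  proof (intro ballI allI impI)
    fix s e :: real assume s: "s \<in> {g a..g b}" and e: "0 < e"
    obtain \<delta> where d: "\<delta> > 0" "\<forall>x\<in>{a..b}. \<forall>y\<in>{a..b}. \<bar>g x - g y\<bar> < \<delta> \<longrightarrow> \<bar>f x - f y\<bar> < e"
      using f e unfolding UCr_def by blast
    show "\<exists>d>0. \<forall>s'\<in>{g a..g b}. dist s' s < d \<longrightarrow> dist (F s') (F s) < e"
    proof (intro exI conjI ballI impI)
      fix s' assume s': "s' \<in> {g a..g b}" "dist s' s < \<delta>"
      obtain x where x: "x \<in> {a..b}" "g x = s" using ex[OF s] by auto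
      obtain x' where x': "x' \<in> {a..b}" "g x' = s'" using ex[OF s'(1)] by auto
      show "dist (F s') (F s) < e"
        using d(2) x x' s'(2) Fg by (auto simp: dist_real_def)
    qed (rule d(1))
  qed
  then show ?thesis using Fg by auto
qed

lemma base: assumes cont: "continuous_on {a..b} g" and f: "UCr f"
  shows "approx f"
  unfolding approx_def
proof (intro allI impI)
  fix \<epsilon> :: real assume e: "\<epsilon> > 0"
  obtain F where F: "continuous_on {g a..g b} F" "\<And>x. x\<in>{a..b} \<Longrightarrow> f x = F (g x)"
    using factor[OF cont f] by blast
  obtain P where P: "real_polynomial_function P" "\<And>s. s \<in> {g a..g b} \<Longrightarrow> \<bar>F s - P s\<bar> < \<epsilon>"
    using Stone_Weierstrass_real_polynomial_function[OF compact_Icc F(1) e] by blast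
  have "polynomial_function (\<lambda>s::real. s + g a)" by (intro polynomial_function_add) auto
  then have "real_polynomial_function (P \<circ> (\<lambda>s. s + g a))"
    using P(1) by (rule real_polynomial_function_compose)
  then obtain q N where q: "P \<circ> (\<lambda>s. s + g a) = (\<lambda>s. \<Sum>i\<le>N. q i * s ^ i)"
    unfolding real_polynomial_function_iff_sum by blast
  have Pq: "P s = (\<Sum>i\<le>N. q i * (s - g a) ^ i)" for s
    using fun_cong[OF q, of "s - g a"] by simp
  show "\<exists>c N. \<forall>x\<in>{a..b}. \<bar>f x - (\<Sum>n<N. c n * gm n x)\<bar> < \<epsilon>"
  proof (intro exI ballI)
    fix x assume x: "x \<in> {a..b}"
    have gx: "g x \<in> {g a..g b}" using x g_mono_le[of a x] g_mono_le[of x b] ab by auto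
    have "(\<Sum>n<Suc N. q n * gm n x) = P (g x)"
      unfolding Pq lessThan_Suc_atMost using gm_pow[OF cont x] by simp
    then show "\<bar>f x - (\<Sum>n<Suc N. q n * gm n x)\<bar> < \<epsilon>" using P(2)[OF gx] F(2)[OF x] by simp
  qed
qed

end



lemma cwe: "continuous (at x within S) h \<Longrightarrow> \<forall>\<^sub>F y in at x within S. f y = h y \<Longrightarrow> f x = h x
  \<Longrightarrow> continuous (at x within S) f"
  unfolding continuous_within by (subst tendsto_cong) auto

lemma ev_gt: "(d::real) < x \<Longrightarrow> \<forall>\<^sub>F y in at x within S. d < y"
  by (rule order_tendstoD(1)[OF tendsto_ident_at])

lemma ev_lt: "(x::real) < d \<Longrightarrow> \<forall>\<^sub>F y in at x within S. y < d"
  by (rule order_tendstoD(2)[OF tendsto_ident_at])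

locale LSj = LSd +
  fixes d :: real
  assumes d_in: "a \<le> d" "d < b"
begin

definition "J = measure mu {d}"
definition "gt x = g x - (if d < x then J else 0)"

lemma J_nonneg: "0 \<le> J" by (simp add: J_def)

lemma J_le: assumes "x \<le> d" "d < y" shows "J \<le> G y - G x"
proof -
  have "J \<le> measure mu {x..<y}" unfolding J_def using assms
    by (intro finite_measure.finite_measure_mono[OF mu_finite]) auto
  then show ?thesis using assms by (simp add: mu_Ico_real)
qed

lemma small_right: assumes "\<epsilon> > 0" shows "\<exists>\<delta>>0. \<forall>y. d < y \<and> y < d + \<delta> \<longrightarrow> measure mu {d<..<y} < \<epsilon>"
proof -
  let ?A = "\<lambda>n::nat. {d<..<d + 1 / Suc n}"
  have dec: "antimono_on UNIV ?A"
  proof (rule antimonoI)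
    fix n m :: nat assume "n \<le> m"
    then have "1 / real (Suc m) \<le> 1 / real (Suc n)" by (intro divide_left_mono) auto
    then show "?A m \<le> ?A n" by auto
  qed
  have "(\<lambda>n. measure mu (?A n)) \<longlonglongrightarrow> measure mu (\<Inter> (range ?A))"
    by (rule finite_measure.finite_Lim_measure_decseq[OF mu_finite _ dec]) auto
  moreover have "\<Inter> (range ?A) = {}"
  proof safe
    fix y assume "y \<in> \<Inter> (range ?A)"
    then have y: "d < y" "\<And>n. y < d + 1 / Suc n" by auto
    obtain n where "1 / Suc n < y - d" using y(1) by (metis diff_gt_0_iff_gt nat_approx_posE)
    then show "y \<in> {}" using y(2)[of n] by simp
  qed
  ultimately have "(\<lambda>n. measure mu (?A n)) \<longlonglongrightarrow> 0" by simp
  from order_tendstoD(2)[OF this assms] obtain n where n: "measure mu (?A n) < \<epsilon>"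
    by (auto simp: eventually_sequentially)
  show ?thesis
  proof (intro exI conjI allI impI)
    show "0 < 1 / real (Suc n)" by simp
    fix y assume "d < y \<and> y < d + 1 / real (Suc n)"
    then have "measure mu {d<..<y} \<le> measure mu (?A n)"
      by (intro finite_measure.finite_measure_mono[OF mu_finite]) auto
    then show "measure mu {d<..<y} < \<epsilon>" using n by simp
  qed
qed

lemma jump_eq: assumes "d < y" shows "G y - G d = J + measure mu {d<..<y}"
proof -
  have e: "{d..<y} = {d} \<union> {d<..<y}" using assms by auto
  have "measure mu ({d} \<union> {d<..<y}) = measure mu {d} + measure mu {d<..<y}"
    by (rule finite_measure.finite_measure_Union[OF mu_finite]) auto
  then have "measure mu {d..<y} = measure mu {d} + measure mu {d<..<y}" using e by simp
  then show ?thesis using assms by (simp add: mu_Ico_real J_def)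
qed

lemma cont_d: "continuous (at d within {a..b}) (\<lambda>x. g x - (if d < x then J else 0))"
  unfolding continuous_within_eps_delta
proof (intro allI impI)
  fix e :: real assume e: "e > 0"
  have lc: "continuous (at d within {a..d}) g" using der d_in by (auto simp: derivator_def)
  obtain d1 where d1: "d1 > 0" "\<forall>x'\<in>{a..d}. dist x' d < d1 \<longrightarrow> dist (g x') (g d) < e"
    using lc e unfolding continuous_within_eps_delta by blast
  obtain d2 where d2: "d2 > 0" "\<forall>y. d < y \<and> y < d + d2 \<longrightarrow> measure mu {d<..<y} < e"
    using small_right[OF e] by blast
  show "\<exists>da>0. \<forall>x'\<in>{a..b}. dist x' d < da \<longrightarrow>
     dist (g x' - (if d < x' then J else 0)) (g d - (if d < d then J else 0)) < e"
  proof (intro exI conjI ballI impI)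
    show "0 < min d1 d2" using d1 d2 by simp
    fix y assume y: "y \<in> {a..b}" "dist y d < min d1 d2"
    show "dist (g y - (if d < y then J else 0)) (g d - (if d < d then J else 0)) < e"
    proof (cases "d < y")
      case True
      have "g y - g d = J + measure mu {d<..<y}" using jump_eq[OF True] y d_in by (simp add: G_eq)
      moreover have "measure mu {d<..<y} < e" using d2(2) True y by (auto simp: dist_real_def)
      moreover have "0 \<le> measure mu {d<..<y}" by simp
      ultimately have "\<bar>g y - J - g d\<bar> < e" unfolding abs_less_iff using e by linarith
      then show ?thesis using True by (simp add: dist_real_def)
    next
      case False
      then show ?thesis using d1(2) y by (auto simp: dist_real_def)
    qed
  qed
qed

lemma gt_derivator: "derivator a b gt"
  unfolding derivator_def
proof safe
  show "mono_on {a..b} gt"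
  proof (rule mono_onI)
    fix x y assume xy: "x \<in> {a..b}" "y \<in> {a..b}" "x \<le> y"
    have "g x \<le> g y" using g_mono_le xy by simp
    moreover have "J \<le> g y - g x" if "x \<le> d" "d < y" using J_le[OF that] xy by (simp add: G_eq)
    ultimately show "gt x \<le> gt y" unfolding gt_def using xy by auto
  qed
  fix x assume x: "x \<in> {a..b}"
  have lc: "continuous (at x within {a..x}) g" using der x by (auto simp: derivator_def)
  show "continuous (at x within {a..x}) gt"
  proof (cases "d < x")
    case True
    have "continuous (at x within {a..x}) (\<lambda>y. g y - J)" using lc by (intro continuous_intros)
    moreover have "\<forall>\<^sub>F y in at x within {a..x}. gt y = g y - J"
      using ev_gt[OF True, of "{a..x}"] by (rule eventually_mono) (simp add: gt_def)
    ultimately show ?thesis by (rule cwe) (use True in \<open>simp add: gt_def\<close>)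
  next
    case False
    show ?thesis
      by (rule cwe[OF lc]) (use False in \<open>auto simp: gt_def eventually_at_filter\<close>)
  qed
qed

sublocale T: LSd a b gt by unfold_locales (rule gt_derivator, rule ab)

lemma gt_eq: "gt = (\<lambda>x. g x - (if d < x then J else 0))" by (simp add: gt_def fun_eq_iff)

lemma cont_iff: assumes "x \<noteq> d"
  shows "continuous (at x within {a..b}) gt \<longleftrightarrow> continuous (at x within {a..b}) g"
proof (cases "d < x")
  case True
  have ev: "\<forall>\<^sub>F y in at x within {a..b}. gt y = g y - J"
    using ev_gt[OF True, of "{a..b}"] by (rule eventually_mono) (simp add: gt_def)
  have ev2: "\<forall>\<^sub>F y in at x within {a..b}. g y = gt y + J"
    using ev by (rule eventually_mono) simp
  show ?thesis
  proof
    assume "continuous (at x within {a..b}) gt"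
    then have "continuous (at x within {a..b}) (\<lambda>y. gt y + J)" by (intro continuous_intros)
    then show "continuous (at x within {a..b}) g"
      by (rule cwe[OF _ ev2]) (use True in \<open>simp add: gt_def\<close>)
  next
    assume "continuous (at x within {a..b}) g"
    then have "continuous (at x within {a..b}) (\<lambda>y. g y - J)" by (intro continuous_intros)
    then show "continuous (at x within {a..b}) gt"
      by (rule cwe[OF _ ev]) (use True in \<open>simp add: gt_def\<close>)
  qed
next
  case False
  then have lt: "x < d" using assms by simp
  have ev: "\<forall>\<^sub>F y in at x within {a..b}. gt y = g y"
    using ev_lt[OF lt, of "{a..b}"] by (rule eventually_mono) (simp add: gt_def)
  have ev2: "\<forall>\<^sub>F y in at x within {a..b}. g y = gt y"
    using ev by (rule eventually_mono) simp
  show ?thesis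
  proof
    assume "continuous (at x within {a..b}) gt"
    then show "continuous (at x within {a..b}) g"
      by (rule cwe[OF _ ev2]) (use lt in \<open>simp add: gt_def\<close>)
  next
    assume "continuous (at x within {a..b}) g"
    then show "continuous (at x within {a..b}) gt"
      by (rule cwe[OF _ ev]) (use lt in \<open>simp add: gt_def\<close>)
  qed
qed

lemma disc_gt: "{x \<in> {a..b}. \<not> continuous (at x within {a..b}) gt} =
    {x \<in> {a..b}. \<not> continuous (at x within {a..b}) g} - {d}"
proof -
  have c: "continuous (at d within {a..b}) gt" using cont_d by (simp add: gt_eq)
  have "x \<in> {x \<in> {a..b}. \<not> continuous (at x within {a..b}) gt} \<longleftrightarrow>
    x \<in> {x \<in> {a..b}. \<not> continuous (at x within {a..b}) g} - {d}" for x
    using cont_iff[of x] c by (cases "x = d") auto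
  then show ?thesis by blast
qed

lemma J_pos: assumes "\<not> continuous (at d within {a..b}) g" shows "0 < J"
proof (rule ccontr)
  assume "\<not> 0 < J"
  then have "J = 0" using J_nonneg by simp
  then have "(\<lambda>x. g x - (if d < x then J else 0)) = g" by auto
  then show False using cont_d assms by simp
qed

lemma Gt_eq: "T.G x = G x - (if d < x then J else 0)"
proof -
  have "d < max a (min b x) \<longleftrightarrow> d < x" using d_in by linarith
  then show ?thesis by (simp add: g_ext_def gt_def)
qed

end



context LSj begin

abbreviation "Dn \<equiv> density mu (\<lambda>t. ennreal (indicator (-{d}) t))"

lemma Tmu_eq: "T.mu = Dn"
proof (rule measure_eqI_Iio)
  show "sets T.mu = sets borel" by simp
  show "sets Dn = sets borel" by simp
  show "emeasure T.mu {..<x} < \<infinity>" for x using T.emeasure_mu_fin[of "{..<x}"] by (simp add: less_top)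
  fix x
  have "emeasure Dn {..<x} = (\<integral>\<^sup>+t. ennreal (indicator (-{d}) t) * indicator {..<x} t \<partial>mu)"
    by (rule emeasure_density) auto
  also have "\<dots> = (\<integral>\<^sup>+t. indicator ({..<x} - {d}) t \<partial>mu)"
    by (intro nn_integral_cong) (auto simp: indicator_def)
  also have "\<dots> = emeasure mu ({..<x} - {d})" by (intro nn_integral_indicator) auto
  also have "\<dots> = ennreal (T.G x - gt a)"
  proof (cases "d < x")
    case True
    have "emeasure mu ({..<x} - {d}) = emeasure mu {..<x} - emeasure mu {d}"
      using True by (intro emeasure_Diff) (auto simp: emeasure_mu_fin)
    also have "emeasure mu {d} = ennreal J" unfolding J_def
      by (simp add: finite_measure.emeasure_eq_measure[OF mu_finite])
    also have "emeasure mu {..<x} - ennreal J = ennreal (G x - g a - J)"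
      by (simp add: mu_lessThan ennreal_minus J_nonneg)
    finally show ?thesis using True d_in by (simp add: Gt_eq gt_def algebra_simps)
  next
    case False
    then have "{..<x} - {d} = {..<x}" by auto
    then show ?thesis using False d_in by (simp add: Gt_eq gt_def mu_lessThan)
  qed
  also have "\<dots> = emeasure T.mu {..<x}" by (simp add: T.mu_lessThan)
  finally show "emeasure T.mu {..<x} = emeasure Dn {..<x}" by simp
qed

lemma Tmu_d: "emeasure T.mu {d} = 0"
proof -
  have "emeasure Dn {d} = (\<integral>\<^sup>+t. ennreal (indicator (-{d}) t) * indicator {d} t \<partial>mu)"
    by (rule emeasure_density) auto
  also have "\<dots> = (\<integral>\<^sup>+t. 0 \<partial>mu)"
    by (intro nn_integral_cong) (auto simp: indicator_def)
  finally show ?thesis by (simp add: Tmu_eq)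
qed

lemma int_split: fixes h :: "real \<Rightarrow> real"
  assumes hm: "h \<in> borel_measurable borel" and hb: "\<And>t. \<bar>h t\<bar> \<le> B" and A: "A \<in> sets borel"
  shows "(\<integral>t. indicator A t * h t \<partial>mu) = (\<integral>t. indicator A t * h t \<partial>T.mu) + (if d \<in> A then J * h d else 0)"
proof -
  have i1: "integrable mu (\<lambda>t. indicator (A - {d}) t * h t)" by (rule mint[OF hm _ hb]) (use A in auto)
  have i2: "integrable mu (\<lambda>t. indicator (A \<inter> {d}) t * h t)" by (rule mint[OF hm _ hb]) (use A in auto)
  have "(\<integral>t. indicator A t * h t \<partial>mu) = (\<integral>t. indicator (A - {d}) t * h t + indicator (A \<inter> {d}) t * h t \<partial>mu)"
    by (intro Bochner_Integration.integral_cong) (auto simp: indicator_def)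
  also have "\<dots> = (\<integral>t. indicator (A - {d}) t * h t \<partial>mu) + (\<integral>t. indicator (A \<inter> {d}) t * h t \<partial>mu)"
    by (rule Bochner_Integration.integral_add[OF i1 i2])
  also have "(\<integral>t. indicator (A \<inter> {d}) t * h t \<partial>mu) = (if d \<in> A then J * h d else 0)"
  proof (cases "d \<in> A")
    case True
    have "(\<integral>t. indicator (A \<inter> {d}) t * h t \<partial>mu) = (\<integral>t. indicator {d} t * h d \<partial>mu)"
      by (intro Bochner_Integration.integral_cong) (auto simp: indicator_def True)
    also have "\<dots> = J * h d" by (simp add: J_def)
    finally show ?thesis using True by simp
  next
    case False
    then have "A \<inter> {d} = {}" by auto
    then show ?thesis using False by simp
  qed
  also have "(\<integral>t. indicator (A - {d}) t * h t \<partial>mu) = (\<integral>t. indicator A t * h t \<partial>T.mu)"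
  proof -
    have "(\<integral>t. indicator A t * h t \<partial>T.mu) = (\<integral>t. indicator (-{d}) t *\<^sub>R (indicator A t * h t) \<partial>mu)"
      unfolding Tmu_eq by (rule integral_density) (use A hm in auto)
    also have "\<dots> = (\<integral>t. indicator (A - {d}) t * h t \<partial>mu)"
      by (intro Bochner_Integration.integral_cong) (auto simp: indicator_def)
    finally show ?thesis by simp
  qed
  finally show ?thesis .
qed

definition "corr n t = indicator {d<..} t * (real n * J * T.gm (n - 1) t)"

lemma corr_meas[measurable]: "corr n \<in> borel_measurable borel"
  unfolding corr_def by measurable

lemma corr_bnd: "\<exists>B. \<forall>t. \<bar>corr n t\<bar> \<le> B"
proof -
  obtain B where B: "\<And>t. \<bar>T.gm (n - 1) t\<bar> \<le> B" using T.gm_bnd by blast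
  have "\<bar>corr n t\<bar> \<le> real n * J * B" for t
    using B[of t] J_nonneg by (auto simp: corr_def indicator_def abs_mult intro!: mult_left_mono)
  then show ?thesis by blast
qed

lemma gm_rel: "x \<in> {a..b} \<Longrightarrow> gm n x = T.gm n x + corr n x"
proof (induction n arbitrary: x)
  case 0 then show ?case by (simp add: corr_def)
next
  case (Suc n)
  have x: "a \<le> x" "x \<le> b" using Suc.prems by auto
  obtain B1 where B1: "\<And>t. \<bar>gm n t\<bar> \<le> B1" using gm_bnd by blast
  obtain B2 where B2: "\<And>t. \<bar>T.gm n t\<bar> \<le> B2" using T.gm_bnd by blast
  obtain B3 where B3: "\<And>t. \<bar>corr n t\<bar> \<le> B3" using corr_bnd by blast
  obtain B4 where B4: "\<And>t. \<bar>T.gm (n - 1) t\<bar> \<le> B4" using T.gm_bnd by blast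
  have "V (gm n) x = (\<integral>t. indicator {a..<x} t * gm n t \<partial>T.mu) + (if d \<in> {a..<x} then J * gm n d else 0)"
    unfolding V_def by (rule int_split[OF gm_meas B1]) auto
  also have "(\<integral>t. indicator {a..<x} t * gm n t \<partial>T.mu) =
      (\<integral>t. indicator {a..<x} t * T.gm n t + indicator {a..<x} t * corr n t \<partial>T.mu)"
    using x by (intro Bochner_Integration.integral_cong) (auto simp: indicator_def Suc.IH)
  also have "\<dots> = T.V (T.gm n) x + (\<integral>t. indicator {a..<x} t * corr n t \<partial>T.mu)"
    unfolding T.V_def
    by (rule Bochner_Integration.integral_add) (auto intro!: T.mint[OF T.gm_meas _ B2] T.mint[OF corr_meas _ B3])
  also have "gm n d = T.gm n d" using Suc.IH[of d] d_in by (simp add: corr_def)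
  finally have Vg: "V (gm n) x = T.V (T.gm n) x + (\<integral>t. indicator {a..<x} t * corr n t \<partial>T.mu) +
      (if d \<in> {a..<x} then J * T.gm n d else 0)" .
  show ?case
  proof (cases "d < x")
    case False
    have "(\<integral>t. indicator {a..<x} t * corr n t \<partial>T.mu) = (\<integral>t. 0 \<partial>T.mu)"
      using False by (intro Bochner_Integration.integral_cong) (auto simp: indicator_def corr_def)
    then have "V (gm n) x = T.V (T.gm n) x" using Vg False by simp
    then show ?thesis using x False by (simp add: gm_Suc T.gm_Suc corr_def)
  next
    case True
    have ci: "(\<integral>t. indicator {a..<x} t * corr n t \<partial>T.mu) = J * (T.gm n x - T.gm n d)"
    proof (cases n)
      case 0 then show ?thesis by (simp add: corr_def)
    next
      case (Suc m)
      have "(\<integral>t. indicator {a..<x} t * corr n t \<partial>T.mu) =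
          (\<integral>t. real n * J * (indicator {d..<x} t * T.gm m t) \<partial>T.mu)"
      proof (rule integral_cong_AE)
        have "AE t in T.mu. t \<notin> {d}" using Tmu_d by (intro AE_not_in) (simp add: null_sets_def)
        then show "AE t in T.mu. indicator {a..<x} t * corr n t = real n * J * (indicator {d..<x} t * T.gm m t)"
          by eventually_elim (use d_in Suc in \<open>auto simp: indicator_def corr_def\<close>)
      qed auto
      also have "\<dots> = real n * J * (T.V (T.gm m) x - T.V (T.gm m) d)"
      proof -
        obtain B5 where B5: "\<And>t. \<bar>T.gm m t\<bar> \<le> B5" using T.gm_bnd by blast
        have "T.V (T.gm m) x - T.V (T.gm m) d = (\<integral>t. indicator {d..<x} t * T.gm m t \<partial>T.mu)"
          by (rule T.V_diff[OF T.gm_meas B5]) (use d_in True in auto)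
        then show ?thesis by simp
      qed
      also have "\<dots> = J * (T.gm n x - T.gm n d)"
        using Suc x d_in by (simp add: T.gm_Suc algebra_simps)
      finally show ?thesis .
    qed
    have "V (gm n) x = T.V (T.gm n) x + J * T.gm n x" using Vg ci True d_in by (simp add: algebra_simps)
    then show ?thesis using x True by (simp add: gm_Suc T.gm_Suc corr_def algebra_simps)
  qed
qed

end



lemma factor_gen:
  fixes phi f :: "real \<Rightarrow> real"
  assumes cont: "continuous_on {c..e} phi" and ce: "c \<le> e"
    and mono: "\<And>x y. x \<in> {c..e} \<Longrightarrow> y \<in> {c..e} \<Longrightarrow> x \<le> y \<Longrightarrow> phi x \<le> phi y"
    and f: "\<And>\<epsilon>. \<epsilon> > 0 \<Longrightarrow> \<exists>\<delta>>0. \<forall>x\<in>{c..e}. \<forall>y\<in>{c..e}. \<bar>phi x - phi y\<bar> < \<delta> \<longrightarrow> \<bar>f x - f y\<bar> < \<epsilon>"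
  shows "\<exists>F. continuous_on {phi c..phi e} F \<and> (\<forall>x\<in>{c..e}. f x = F (phi x))"
proof -
  have ex: "\<exists>x. x \<in> {c..e} \<and> phi x = s" if "s \<in> {phi c..phi e}" for s
    using IVT'[of phi c s e] that cont ce by auto
  define F where "F s = f (SOME x. x \<in> {c..e} \<and> phi x = s)" for s
  have same: "f x = f y" if "x \<in> {c..e}" "y \<in> {c..e}" "phi x = phi y" for x y
  proof (rule ccontr)
    assume ne: "f x \<noteq> f y"
    define dd where "dd = \<bar>f x - f y\<bar>"
    then have "dd > 0" using ne by simp
    then obtain \<delta> where "\<delta> > 0" "\<forall>x\<in>{c..e}. \<forall>y\<in>{c..e}. \<bar>phi x - phi y\<bar> < \<delta> \<longrightarrow> \<bar>f x - f y\<bar> < dd"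
      using f by blast
    then show False using that dd_def by force
  qed
  have Fg: "F (phi x) = f x" if "x \<in> {c..e}" for x
  proof -
    have "(SOME y. y \<in> {c..e} \<and> phi y = phi x) \<in> {c..e} \<and> phi (SOME y. y \<in> {c..e} \<and> phi y = phi x) = phi x"
      by (rule someI[of _ x]) (use that in auto)
    then show ?thesis unfolding F_def using same that by metis
  qed
  have "continuous_on {phi c..phi e} F"
    unfolding continuous_on_iff
  proof (intro ballI allI impI)
    fix s ee :: real assume s: "s \<in> {phi c..phi e}" and e: "0 < ee"
    obtain \<delta> where dl: "\<delta> > 0" "\<forall>x\<in>{c..e}. \<forall>y\<in>{c..e}. \<bar>phi x - phi y\<bar> < \<delta> \<longrightarrow> \<bar>f x - f y\<bar> < ee"
      using f e by blast
    show "\<exists>dd>0. \<forall>s'\<in>{phi c..phi e}. dist s' s < dd \<longrightarrow> dist (F s') (F s) < ee"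
    proof (intro exI conjI ballI impI)
      fix s' assume s': "s' \<in> {phi c..phi e}" "dist s' s < \<delta>"
      obtain x where x: "x \<in> {c..e}" "phi x = s" using ex[OF s] by auto
      obtain x' where x': "x' \<in> {c..e}" "phi x' = s'" using ex[OF s'(1)] by auto
      show "dist (F s') (F s) < ee"
        using dl(2) x x' s'(2) Fg by (auto simp: dist_real_def)
    qed (rule dl(1))
  qed
  then show ?thesis using Fg by auto
qed

context LSd begin

lemma V_sum: fixes q :: "nat \<Rightarrow> real" and h :: "nat \<Rightarrow> real \<Rightarrow> real"
  assumes hm: "\<And>n. h n \<in> borel_measurable borel" and hb: "\<And>n. \<exists>B. \<forall>t. \<bar>h n t\<bar> \<le> B"
  shows "V (\<lambda>t. \<Sum>n<N. q n * h n t) x = (\<Sum>n<N. q n * V (h n) x)"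
proof -
  have int: "integrable mu (\<lambda>t. indicator {a..<x} t * h n t)" for n
  proof -
    obtain B where "\<And>t. \<bar>h n t\<bar> \<le> B" using hb by blast
    then show ?thesis by (intro mint[OF hm]) auto
  qed
  have "V (\<lambda>t. \<Sum>n<N. q n * h n t) x = (\<integral>t. (\<Sum>n<N. q n * (indicator {a..<x} t * h n t)) \<partial>mu)"
    unfolding V_def by (intro Bochner_Integration.integral_cong refl) (simp add: sum_distrib_left mult.left_commute)
  also have "\<dots> = (\<Sum>n<N. (\<integral>t. q n * (indicator {a..<x} t * h n t) \<partial>mu))"
    by (rule Bochner_Integration.integral_sum) (auto intro: int)
  also have "\<dots> = (\<Sum>n<N. q n * V (h n) x)" by (simp add: V_def)
  finally show ?thesis .
qed

lemma approx_close: assumes "\<And>\<epsilon>. \<epsilon> > 0 \<Longrightarrow> \<exists>\<phi>. approx \<phi> \<and> (\<forall>x\<in>{a..b}. \<bar>f x - \<phi> x\<bar> < \<epsilon>)"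
  shows "approx f"
  unfolding approx_def
proof (intro allI impI)
  fix \<epsilon> :: real assume e: "\<epsilon> > 0"
  obtain \<phi> where p: "approx \<phi>" "\<forall>x\<in>{a..b}. \<bar>f x - \<phi> x\<bar> < \<epsilon>/2" using assms[of "\<epsilon>/2"] e by auto
  obtain c N where cN: "\<forall>x\<in>{a..b}. \<bar>\<phi> x - (\<Sum>n<N. c n * gm n x)\<bar> < \<epsilon>/2"
    using p(1) e unfolding approx_def by (meson half_gt_zero)
  show "\<exists>c N. \<forall>x\<in>{a..b}. \<bar>f x - (\<Sum>n<N. c n * gm n x)\<bar> < \<epsilon>"
  proof (intro exI[of _ c] exI[of _ N] ballI)
    fix x assume x: "x \<in> {a..b}"
    let ?S = "\<Sum>n<N. c n * gm n x"
    have "\<bar>f x - ?S\<bar> \<le> \<bar>f x - \<phi> x\<bar> + \<bar>\<phi> x - ?S\<bar>"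
      using abs_triangle_ineq[of "f x - \<phi> x" "\<phi> x - ?S"] by simp
    moreover have "\<bar>f x - \<phi> x\<bar> < \<epsilon>/2" "\<bar>\<phi> x - ?S\<bar> < \<epsilon>/2" using p(2) cN x by auto
    ultimately show "\<bar>f x - ?S\<bar> < \<epsilon>" by linarith
  qed
qed

lemma uc_glue: assumes "a \<le> e" "e \<le> b"
  and u1: "\<And>\<epsilon>. \<epsilon> > 0 \<Longrightarrow> \<exists>\<delta>>0. \<forall>x\<in>{a..e}. \<forall>y\<in>{a..e}. \<bar>g x - g y\<bar> < \<delta> \<longrightarrow> \<bar>h x - h y\<bar> < \<epsilon>"
  and u2: "\<And>\<epsilon>. \<epsilon> > 0 \<Longrightarrow> \<exists>\<delta>>0. \<forall>x\<in>{e..b}. \<forall>y\<in>{e..b}. \<bar>g x - g y\<bar> < \<delta> \<longrightarrow> \<bar>h x - h y\<bar> < \<epsilon>"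
  shows "UCr h"
  unfolding UCr_def
proof (intro allI impI)
  fix \<epsilon> :: real assume eps: "\<epsilon> > 0"
  obtain d1 where d1: "d1 > 0" "\<forall>x\<in>{a..e}. \<forall>y\<in>{a..e}. \<bar>g x - g y\<bar> < d1 \<longrightarrow> \<bar>h x - h y\<bar> < \<epsilon>/2"
    using u1[of "\<epsilon>/2"] eps by auto
  obtain d2 where d2: "d2 > 0" "\<forall>x\<in>{e..b}. \<forall>y\<in>{e..b}. \<bar>g x - g y\<bar> < d2 \<longrightarrow> \<bar>h x - h y\<bar> < \<epsilon>/2"
    using u2[of "\<epsilon>/2"] eps by auto
  have cross: "\<bar>h x - h y\<bar> < \<epsilon>" if "x \<in> {a..e}" "y \<in> {e..b}" "\<bar>g x - g y\<bar> < min d1 d2" for x y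
  proof -
    have m: "g x \<le> g e" "g e \<le> g y" using that assms by (auto intro!: g_mono_le)
    have "\<bar>h x - h e\<bar> < \<epsilon>/2" using d1(2) that assms m by auto
    moreover have "\<bar>h e - h y\<bar> < \<epsilon>/2" using d2(2) that assms m by auto
    ultimately show ?thesis by linarith
  qed
  show "\<exists>\<delta>>0. \<forall>x\<in>{a..b}. \<forall>y\<in>{a..b}. \<bar>g x - g y\<bar> < \<delta> \<longrightarrow> \<bar>h x - h y\<bar> < \<epsilon>"
  proof (intro exI conjI ballI impI)
    show "min d1 d2 > 0" using d1 d2 by simp
    fix x y assume x: "x \<in> {a..b}" and y: "y \<in> {a..b}" and xy: "\<bar>g x - g y\<bar> < min d1 d2"
    consider "x \<le> e" "y \<le> e" | "e \<le> x" "e \<le> y" | "x \<le> e" "e \<le> y" | "y \<le> e" "e \<le> x" by linarith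
    then show "\<bar>h x - h y\<bar> < \<epsilon>"
    proof cases
      case 1
      then have "x \<in> {a..e}" "y \<in> {a..e}" using x y by auto
      then have "\<bar>h x - h y\<bar> < \<epsilon>/2" using d1(2) xy by auto
      then show ?thesis using eps by linarith
    next
      case 2
      then have "x \<in> {e..b}" "y \<in> {e..b}" using x y by auto
      then have "\<bar>h x - h y\<bar> < \<epsilon>/2" using d2(2) xy by auto
      then show ?thesis using eps by linarith
    next
      case 3 then show ?thesis using cross[of x y] x y xy by auto
    next
      case 4 then show ?thesis using cross[of y x] x y xy by (auto simp: abs_minus_commute)
    qed
  qed
qed

lemma upset_measure: assumes ae: "a \<le> e"
  shows "measure mu {t \<in> {a..<e}. v < G t} \<le> max 0 (G e - v)"
proof -
  define U where "U = {t \<in> {a..<e}. v < G t}"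
  have up: "t' \<in> U" if "t \<in> U" "t \<le> t'" "t' < e" for t t'
    using that G_mono[of t t'] by (auto simp: U_def)
  have "measure mu U \<le> max 0 (G e - v)"
  proof (cases "U = {}")
    case True then show ?thesis by simp
  next
    case ne: False
    have bb: "bdd_below U" by (auto simp: U_def intro!: bdd_belowI[of _ a])
    define \<tau> where "\<tau> = Inf U"
    have low: "\<tau> \<le> t" if "t \<in> U" for t unfolding \<tau>_def by (rule cInf_lower[OF that bb])
    have inU: "t \<in> U" if "\<tau> < t" "t < e" for t
    proof -
      have "Inf U < t" using that(1) \<tau>_def by simp
      then obtain u where "u \<in> U" "u < t" using cInf_lessD[OF ne] by blast
      then show ?thesis using up[of u t] that by auto
    qed
    have Ue: "U \<subseteq> {a..<e}" by (auto simp: U_def)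
    show ?thesis
    proof (cases "\<tau> \<in> U")
      case True
      have "U = {\<tau>..<e}"
      proof
        show "U \<subseteq> {\<tau>..<e}" using low Ue by auto
        show "{\<tau>..<e} \<subseteq> U" using up[OF True] by auto
      qed
      moreover have "G \<tau> > v" "\<tau> < e" using True by (auto simp: U_def)
      ultimately show ?thesis by (simp add: mu_Ico_real)
    next
      case False
      define A where "A n = {\<tau> + 1 / Suc n..<e}" for n :: nat
      have inc: "incseq A" unfolding A_def incseq_def
      proof (intro allI impI subsetI)
        fix m n :: nat and t assume mn: "m \<le> n" and t: "t \<in> {\<tau> + 1 / Suc m..<e}"
        have "1 / real (Suc n) \<le> 1 / real (Suc m)" using mn by (intro divide_left_mono) auto
        then show "t \<in> {\<tau> + 1 / Suc n..<e}" using t by auto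
      qed
      have UA: "(\<Union>n. A n) = U"
      proof safe
        fix t n assume t: "t \<in> A n"
        have pos: "0 < 1 / real (Suc n)" by simp
        have "\<tau> + 1 / real (Suc n) \<le> t" "t < e" using t by (auto simp: A_def)
        then show "t \<in> U" using inU[of t] pos by linarith
      next
        fix t assume t: "t \<in> U"
        then have "\<tau> < t" using low[OF t] False by (cases "\<tau> = t") auto
        then obtain n where "1 / Suc n < t - \<tau>" by (metis diff_gt_0_iff_gt nat_approx_posE)
        then have "t \<in> A n" using t by (auto simp: A_def U_def)
        then show "t \<in> (\<Union>n. A n)" by blast
      qed
      have rA: "range A \<subseteq> sets mu" by (auto simp: A_def)
      have lim: "(\<lambda>n. measure mu (A n)) \<longlonglongrightarrow> measure mu (\<Union>n. A n)"
        by (rule finite_measure.finite_Lim_measure_incseq[OF mu_finite rA inc])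
      have bnd: "measure mu (A n) \<le> max 0 (G e - v)" for n
      proof (cases "\<tau> + 1 / Suc n < e")
        case True
        have "\<tau> + 1 / Suc n \<in> U" using inU True by simp
        then have "v < G (\<tau> + 1 / Suc n)" by (simp add: U_def)
        then show ?thesis using True by (simp add: A_def mu_Ico_real)
      next
        case False then show ?thesis by (simp add: A_def)
      qed
      have "measure mu (\<Union>n. A n) \<le> max 0 (G e - v)"
        using lim bnd by (intro LIMSEQ_le_const2) auto
      then show ?thesis using UA by simp
    qed
  qed
  then show ?thesis by (simp add: U_def)
qed

end



context LSd begin

lemma lin_meas[measurable]: "(\<lambda>t. \<Sum>n<N. q n * gm n t) \<in> borel_measurable borel"
  by measurable

lemma lin_bnd: "\<exists>B. \<forall>t. \<bar>\<Sum>n<N. q n * gm n t\<bar> \<le> B"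
proof -
  obtain Bf where Bf: "\<And>n t. \<bar>gm n t\<bar> \<le> Bf n" using gm_bnd by metis
  have "\<bar>\<Sum>n<N. q n * gm n t\<bar> \<le> (\<Sum>n<N. \<bar>q n\<bar> * Bf n)" for t
  proof -
    have "\<bar>\<Sum>n<N. q n * gm n t\<bar> \<le> (\<Sum>n<N. \<bar>q n * gm n t\<bar>)" by (rule sum_abs)
    also have "\<dots> \<le> (\<Sum>n<N. \<bar>q n\<bar> * Bf n)"
      by (intro sum_mono) (auto simp: abs_mult intro!: mult_left_mono Bf)
    finally show ?thesis .
  qed
  then show ?thesis by blast
qed

lemma lin_lip: "\<exists>C. \<forall>x y. x \<le> y \<longrightarrow> \<bar>(\<Sum>n<N. q n * gm n y) - (\<Sum>n<N. q n * gm n x)\<bar> \<le> C * (G y - G x)"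
proof -
  obtain Cf where Cf: "\<And>n x y. x \<le> y \<Longrightarrow> \<bar>gm n y - gm n x\<bar> \<le> Cf n * (G y - G x)" using gm_lip by metis
  have "\<bar>(\<Sum>n<N. q n * gm n y) - (\<Sum>n<N. q n * gm n x)\<bar> \<le> (\<Sum>n<N. \<bar>q n\<bar> * \<bar>Cf n\<bar>) * (G y - G x)"
    if xy: "x \<le> y" for x y
  proof -
    have G0: "0 \<le> G y - G x" using G_mono[OF xy] by simp
    have "\<bar>(\<Sum>n<N. q n * gm n y) - (\<Sum>n<N. q n * gm n x)\<bar> = \<bar>\<Sum>n<N. q n * (gm n y - gm n x)\<bar>"
      by (simp add: sum_subtractf algebra_simps)
    also have "\<dots> \<le> (\<Sum>n<N. \<bar>q n * (gm n y - gm n x)\<bar>)" by (rule sum_abs)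
    also have "\<dots> \<le> (\<Sum>n<N. \<bar>q n\<bar> * (\<bar>Cf n\<bar> * (G y - G x)))"
    proof (intro sum_mono)
      fix n
      have "\<bar>gm n y - gm n x\<bar> \<le> \<bar>Cf n\<bar> * (G y - G x)"
        using Cf[OF xy, of n] G0 by (meson abs_ge_self mult_right_mono order_trans)
      then show "\<bar>q n * (gm n y - gm n x)\<bar> \<le> \<bar>q n\<bar> * (\<bar>Cf n\<bar> * (G y - G x))"
        by (auto simp: abs_mult intro!: mult_left_mono)
    qed
    also have "\<dots> = (\<Sum>n<N. \<bar>q n\<bar> * \<bar>Cf n\<bar>) * (G y - G x)" by (simp add: sum_distrib_right mult.assoc)
    finally show ?thesis .
  qed
  then show ?thesis by blast
qed

end

context LSj begin

lemma gt_cont_on: assumes contR: "\<And>x. x \<in> {d<..b} \<Longrightarrow> continuous (at x within {a..b}) g"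
  shows "continuous_on {d..b} gt"
  unfolding continuous_on_eq_continuous_within
proof
  fix x assume x: "x \<in> {d..b}"
  have "continuous (at x within {a..b}) gt"
  proof (cases "x = d")
    case True then show ?thesis using cont_d by (simp add: gt_eq)
  next
    case False then show ?thesis using cont_iff[OF False] contR x by auto
  qed
  then show "continuous (at x within {d..b}) gt"
    by (rule continuous_within_subset) (use d_in in auto)
qed

lemma transfer:
  fixes H :: "real \<Rightarrow> real"
  assumes Hm: "H \<in> borel_measurable borel" and Hb: "\<And>t. \<bar>H t\<bar> \<le> BH" and Ha: "T.approx H"
  shows "approx (\<lambda>x. c + T.V H x + (if d < x then J * H x else 0))"
  unfolding approx_def
proof (intro allI impI)
  fix \<epsilon> :: real assume e: "\<epsilon> > 0"
  define LT where "LT = gt b - gt a"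
  have LT0: "0 \<le> LT" unfolding LT_def using T.g_mono_le[of a b] ab by auto
  define \<eta> where "\<eta> = \<epsilon> / (LT + J + 1)"
  have eta: "\<eta> > 0" unfolding \<eta>_def using e LT0 J_nonneg by auto
  have etaLT: "\<eta> * LT + J * \<eta> < \<epsilon>"
  proof -
    have "\<eta> * (LT + J + 1) = \<epsilon>" unfolding \<eta>_def using LT0 J_nonneg by auto
    then show ?thesis using eta by (simp add: algebra_simps)
  qed
  obtain q N where qN: "\<forall>x\<in>{a..b}. \<bar>H x - (\<Sum>n<N. q n * T.gm n x)\<bar> < \<eta>"
    using Ha eta unfolding T.approx_def by blast
  define P where "P t = (\<Sum>n<N. q n * T.gm n t)" for t
  have Pm: "P \<in> borel_measurable borel" unfolding P_def by measurable
  obtain BP where BP: "\<And>t. \<bar>P t\<bar> \<le> BP" unfolding P_def using T.lin_bnd by blast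
  define cc where "cc n = (if n = 0 then c else q (n - 1) / real n)" for n
  have key: "(\<Sum>n<Suc N. cc n * gm n x) = c + T.V P x + (if d < x then J * P x else 0)"
    if x: "x \<in> {a..b}" for x
  proof -
    have "(\<Sum>n<Suc N. cc n * gm n x) = c + (\<Sum>n<N. q n / real (Suc n) * gm (Suc n) x)"
      unfolding sum.lessThan_Suc_shift by (simp add: cc_def)
    also have "(\<Sum>n<N. q n / real (Suc n) * gm (Suc n) x) =
        (\<Sum>n<N. q n * T.V (T.gm n) x + (if d < x then J * (q n * T.gm n x) else 0))"
    proof (intro sum.cong refl)
      fix n
      have "gm (Suc n) x = T.gm (Suc n) x + corr (Suc n) x" by (rule gm_rel[OF x])
      also have "\<dots> = real (Suc n) * T.V (T.gm n) x + (if d < x then real (Suc n) * J * T.gm n x else 0)"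
        using x by (simp add: T.gm_Suc corr_def)
      finally show "q n / real (Suc n) * gm (Suc n) x =
          q n * T.V (T.gm n) x + (if d < x then J * (q n * T.gm n x) else 0)"
        by (simp add: field_simps del: of_nat_Suc)
    qed
    also have "\<dots> = (\<Sum>n<N. q n * T.V (T.gm n) x) + (if d < x then J * P x else 0)"
      by (simp add: sum.distrib P_def sum_distrib_left)
    also have "(\<Sum>n<N. q n * T.V (T.gm n) x) = T.V P x"
      unfolding P_def by (rule T.V_sum[symmetric]) (auto intro: T.gm_bnd)
    finally show ?thesis by simp
  qed
  show "\<exists>c' N. \<forall>x\<in>{a..b}. \<bar>c + T.V H x + (if d < x then J * H x else 0) - (\<Sum>n<N. c' n * gm n x)\<bar> < \<epsilon>"
  proof (intro exI[of _ cc] exI[of _ "Suc N"] ballI)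
    fix x assume x: "x \<in> {a..b}"
    have dP: "\<bar>H t - P t\<bar> \<le> \<eta>" if "t \<in> {a..<x}" for t
      using qN that x unfolding P_def by (auto intro: less_imp_le)
    have i1: "integrable T.mu (\<lambda>t. indicator {a..<x} t * H t)" by (rule T.mint[OF Hm _ Hb]) auto
    have i2: "integrable T.mu (\<lambda>t. indicator {a..<x} t * P t)" by (rule T.mint[OF Pm _ BP]) auto
    have "T.V H x - T.V P x = (\<integral>t. indicator {a..<x} t * H t - indicator {a..<x} t * P t \<partial>T.mu)"
      unfolding T.V_def by (rule Bochner_Integration.integral_diff[OF i1 i2, symmetric])
    also have "\<dots> = (\<integral>t. indicator {a..<x} t * (H t - P t) \<partial>T.mu)"
      by (simp add: algebra_simps)
    also have "\<bar>\<dots>\<bar> \<le> \<eta> * measure T.mu {a..<x}"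
      by (rule T.mbound) (use Hm Pm dP in auto)
    also have "measure T.mu {a..<x} \<le> LT"
      using x T.mu_Ico_real[of a x] T.G_mono[of x b] unfolding LT_def by (simp add: T.G_eq)
    finally have i1: "\<bar>T.V H x - T.V P x\<bar> \<le> \<eta> * LT" using eta by (smt (verit) mult_left_mono)
    have hp: "\<bar>H x - P x\<bar> \<le> \<eta>" using qN x unfolding P_def by (auto intro: less_imp_le)
    have i2: "\<bar>(if d < x then J * H x else 0) - (if d < x then J * P x else 0)\<bar> \<le> J * \<eta>"
    proof (cases "d < x")
      case True
      have "\<bar>J * H x - J * P x\<bar> = J * \<bar>H x - P x\<bar>"
        using J_nonneg by (simp add: abs_mult right_diff_distrib[symmetric])
      also have "\<dots> \<le> J * \<eta>" using hp J_nonneg by (rule mult_left_mono)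
      finally show ?thesis using True by simp
    next
      case False then show ?thesis using J_nonneg eta by simp
    qed
    have "\<bar>c + T.V H x + (if d < x then J * H x else 0) - (\<Sum>n<Suc N. cc n * gm n x)\<bar> =
        \<bar>(T.V H x - T.V P x) + ((if d < x then J * H x else 0) - (if d < x then J * P x else 0))\<bar>"
      using key[OF x] by simp
    also have "\<dots> \<le> \<bar>T.V H x - T.V P x\<bar> + \<bar>(if d < x then J * H x else 0) - (if d < x then J * P x else 0)\<bar>"
      by (rule abs_triangle_ineq)
    finally show "\<bar>c + T.V H x + (if d < x then J * H x else 0) - (\<Sum>n<Suc N. cc n * gm n x)\<bar> < \<epsilon>"
      using i1 i2 etaLT by linarith
  qed
qed

end



lemma min_contract:
  fixes phi :: "real \<Rightarrow> real"
  assumes mono: "\<And>x y. x \<in> S \<Longrightarrow> y \<in> S \<Longrightarrow> x \<le> y \<Longrightarrow> phi x \<le> phi y"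
    and S: "x \<in> S" "y \<in> S" "e \<in> S"
  shows "\<bar>phi (min x e) - phi (min y e)\<bar> \<le> \<bar>phi x - phi y\<bar>"
proof -
  consider "x \<le> e" "y \<le> e" | "x \<le> e" "e < y" | "e < x" "y \<le> e" | "e < x" "e < y" by linarith
  then show ?thesis
  proof cases
    case 2 then show ?thesis using mono[of x e] mono[of e y] S by auto
  next
    case 3 then show ?thesis using mono[of y e] mono[of e x] S by auto
  qed auto
qed

lemma max_contract:
  fixes phi :: "real \<Rightarrow> real"
  assumes mono: "\<And>x y. x \<in> S \<Longrightarrow> y \<in> S \<Longrightarrow> x \<le> y \<Longrightarrow> phi x \<le> phi y"
    and S: "x \<in> S" "y \<in> S" "e \<in> S"
  shows "\<bar>phi (max x e) - phi (max y e)\<bar> \<le> \<bar>phi x - phi y\<bar>"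
proof -
  consider "x \<le> e" "y \<le> e" | "x \<le> e" "e < y" | "e < x" "y \<le> e" | "e < x" "e < y" by linarith
  then show ?thesis
  proof cases
    case 2 then show ?thesis using mono[of x e] mono[of e y] S by auto
  next
    case 3 then show ?thesis using mono[of y e] mono[of e x] S by auto
  qed auto
qed

lemma clamp01_lip: "\<bar>max 0 (min 1 u) - max 0 (min 1 v)\<bar> \<le> \<bar>u - (v::real)\<bar>"
  by (auto simp: max_def min_def abs_if)

context LSj begin

definition "rmp k s = max 0 (min 1 (1 - (gt d - s) / k))"

lemma rmp_01: "0 \<le> rmp k s" "rmp k s \<le> 1" by (auto simp: rmp_def)

lemma rmp_lip: assumes "k > 0" shows "\<bar>rmp k s - rmp k s'\<bar> \<le> \<bar>s - s'\<bar> / k"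
proof -
  have "\<bar>rmp k s - rmp k s'\<bar> \<le> \<bar>(1 - (gt d - s) / k) - (1 - (gt d - s') / k)\<bar>"
    unfolding rmp_def by (rule clamp01_lip)
  also have "(1 - (gt d - s) / k) - (1 - (gt d - s') / k) = (s - s') / k"
    using assms by (simp add: field_simps)
  also have "\<bar>(s - s') / k\<bar> = \<bar>s - s'\<bar> / k" using assms by (simp add: abs_divide)
  finally show ?thesis .
qed

lemma rmp_top: "k > 0 \<Longrightarrow> rmp k (gt d) = 1" by (simp add: rmp_def)

lemma rmp_cont: "k \<noteq> 0 \<Longrightarrow> continuous_on UNIV (rmp k)" unfolding rmp_def by (intro continuous_intros) auto

lemma rmp_meas[measurable]: "rmp k \<in> borel_measurable borel"
  unfolding rmp_def by measurable

lemma rmp_int: assumes k: "k > 0" and x: "a \<le> x" "x \<le> d"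
  shows "0 \<le> T.V (\<lambda>t. rmp k (T.G t)) x" "T.V (\<lambda>t. rmp k (T.G t)) x \<le> k"
proof -
  have hm: "(\<lambda>t. rmp k (T.G t)) \<in> borel_measurable borel" by measurable
  have hb: "\<And>t. \<bar>rmp k (T.G t)\<bar> \<le> 1" using rmp_01 by (simp add: abs_le_iff)
  show "0 \<le> T.V (\<lambda>t. rmp k (T.G t)) x" unfolding T.V_def
    by (intro integral_nonneg_AE) (auto intro!: AE_I2 simp: rmp_01)
  define U where "U = {t \<in> {a..<d}. gt d - k < T.G t}"
  have U: "U \<in> sets borel" unfolding U_def by measurable
  have "T.V (\<lambda>t. rmp k (T.G t)) x \<le> (\<integral>t. indicator U t \<partial>T.mu)"
    unfolding T.V_def
  proof (rule integral_mono)
    show "integrable T.mu (\<lambda>t. indicator {a..<x} t * rmp k (T.G t))" by (rule T.mint[OF hm _ hb]) auto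
    show "integrable T.mu (\<lambda>t. indicator U t :: real)"
      using U T.emeasure_mu_fin[of U] by (intro integrable_real_indicator) (auto simp: less_top)
    fix t show "indicator {a..<x} t * rmp k (T.G t) \<le> indicator U t"
    proof (cases "t \<in> {a..<x} \<and> gt d - k < T.G t")
      case True then show ?thesis using x rmp_01[of k "T.G t"] by (auto simp: U_def indicator_def)
    next
      case False
      then have "t \<notin> {a..<x} \<or> rmp k (T.G t) = 0"
        using k by (auto simp: rmp_def field_simps max_def min_def)
      then show ?thesis by (auto simp: indicator_def)
    qed
  qed
  also have "\<dots> = measure T.mu U" using U by simp
  also have "\<dots> \<le> max 0 (T.G d - (gt d - k))" unfolding U_def by (rule T.upset_measure) (use d_in in simp)
  also have "\<dots> = k" using k d_in by (simp add: T.G_eq)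
  finally show "T.V (\<lambda>t. rmp k (T.G t)) x \<le> k" .
qed

end



context LSj begin

lemma step:
  assumes contR: "\<And>x. x \<in> {d<..b} \<Longrightarrow> continuous (at x within {a..b}) g"
    and Jpos: "0 < J"
    and IH: "\<And>f. T.UCr f \<Longrightarrow> T.approx f"
    and f: "UCr f"
  shows "approx f"
proof (rule approx_close)
  fix \<epsilon> :: real assume eps: "\<epsilon> > 0"
  have e3: "\<epsilon>/3 > 0" using eps by simp
  have gtc: "continuous_on {d..b} gt" by (rule gt_cont_on[OF contR])
  have gtG: "T.G t = gt t" if "t \<in> {a..b}" for t using that by (rule T.G_eq)
  have gtm: "gt x \<le> gt y" if "x \<in> {a..b}" "y \<in> {a..b}" "x \<le> y" for x y using T.g_mono_le that .
  have g_gt: "g t = gt t + J" if "d < t" for t using that by (simp add: gt_def)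
  have g_gt2: "g t = gt t" if "t \<le> d" for t using that by (simp add: gt_def)
  define s0 where "s0 = gt d"
  define s1 where "s1 = gt b"
  have s01: "s0 \<le> s1" unfolding s0_def s1_def using d_in by (intro gtm) auto

  define f1 where "f1 x = f (min x d)" for x
  have f1uc: "T.UCr f1"
    unfolding T.UCr_def
  proof (intro allI impI)
    fix e :: real assume e: "e > 0"
    obtain \<delta> where dl: "\<delta> > 0" "\<forall>x\<in>{a..b}. \<forall>y\<in>{a..b}. \<bar>g x - g y\<bar> < \<delta> \<longrightarrow> \<bar>f x - f y\<bar> < e"
      using f e unfolding UCr_def by blast
    show "\<exists>\<delta>>0. \<forall>x\<in>{a..b}. \<forall>y\<in>{a..b}. \<bar>gt x - gt y\<bar> < \<delta> \<longrightarrow> \<bar>f1 x - f1 y\<bar> < e"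
    proof (intro exI conjI ballI impI)
      fix x y assume x: "x \<in> {a..b}" and y: "y \<in> {a..b}" and xy: "\<bar>gt x - gt y\<bar> < \<delta>"
      have mx: "min x d \<in> {a..b}" "min y d \<in> {a..b}" using x y d_in by auto
      have "\<bar>gt (min x d) - gt (min y d)\<bar> \<le> \<bar>gt x - gt y\<bar>"
        by (rule min_contract[of "{a..b}"]) (use gtm x y d_in in auto)
      moreover have "g (min x d) = gt (min x d)" "g (min y d) = gt (min y d)" by (auto intro!: g_gt2)
      ultimately have "\<bar>g (min x d) - g (min y d)\<bar> < \<delta>" using xy by simp
      then show "\<bar>f1 x - f1 y\<bar> < e" using dl(2) mx unfolding f1_def by blast
    qed (rule dl(1))
  qed
  obtain bq M where bqM: "\<forall>x\<in>{a..b}. \<bar>f1 x - (\<Sum>n<M. bq n * T.gm n x)\<bar> < \<epsilon>/3"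
    using IH[OF f1uc] e3 unfolding T.approx_def by blast
  define bb where "bb n = (if n < M then bq n else 0)" for n
  define P where "P x = (\<Sum>n<M. bq n * T.gm n x)" for x
  have P_alt: "P x = bb 0 + (\<Sum>n<M. bb (Suc n) * T.gm (Suc n) x)" for x
  proof -
    have "(\<Sum>n<Suc M. bb n * T.gm n x) = (\<Sum>n<M. bb n * T.gm n x)" by (simp add: bb_def)
    also have "\<dots> = P x" unfolding P_def by (intro sum.cong) (auto simp: bb_def)
    finally show ?thesis unfolding sum.lessThan_Suc_shift by simp
  qed
  define c where "c = bb 0"
  define H1 where "H1 t = (\<Sum>n<M. (bb (Suc n) * real (Suc n)) * T.gm n t)" for t
  have H1m[measurable]: "H1 \<in> borel_measurable borel" unfolding H1_def by (rule T.lin_meas)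
  obtain B1 where B1: "\<And>t. \<bar>H1 t\<bar> \<le> B1"
    using T.lin_bnd[of "\<lambda>n. bb (Suc n) * real (Suc n)" M] unfolding H1_def by blast
  obtain C1 where C1: "\<And>x y. x \<le> y \<Longrightarrow> \<bar>H1 y - H1 x\<bar> \<le> C1 * (T.G y - T.G x)"
    using T.lin_lip[of "\<lambda>n. bb (Suc n) * real (Suc n)" M] unfolding H1_def by blast
  have H1lip: "\<bar>H1 x - H1 y\<bar> \<le> \<bar>C1\<bar> * \<bar>gt x - gt y\<bar>" if "x \<in> {a..b}" "y \<in> {a..b}" for x y
  proof (cases "x \<le> y")
    case True
    have "\<bar>H1 y - H1 x\<bar> \<le> C1 * (gt y - gt x)" using C1[OF True] that by (simp add: gtG)
    also have "\<dots> \<le> \<bar>C1\<bar> * (gt y - gt x)" using gtm[OF that True] by (intro mult_right_mono) auto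
    also have "gt y - gt x = \<bar>gt x - gt y\<bar>" using gtm[OF that True] by simp
    finally show ?thesis by (simp add: abs_minus_commute)
  next
    case False
    then have yx: "y \<le> x" by simp
    have "\<bar>H1 x - H1 y\<bar> \<le> C1 * (gt x - gt y)" using C1[OF yx] that by (simp add: gtG)
    also have "\<dots> \<le> \<bar>C1\<bar> * (gt x - gt y)" using gtm[OF that(2,1) yx] by (intro mult_right_mono) auto
    also have "gt x - gt y = \<bar>gt x - gt y\<bar>" using gtm[OF that(2,1) yx] by simp
    finally show ?thesis .
  qed
  have VH1: "c + T.V H1 x = P x" if "a \<le> x" for x
  proof -
    have "T.V H1 x = (\<Sum>n<M. (bb (Suc n) * real (Suc n)) * T.V (T.gm n) x)"
      unfolding H1_def by (rule T.V_sum) (auto intro: T.gm_bnd)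
    also have "\<dots> = (\<Sum>n<M. bb (Suc n) * T.gm (Suc n) x)"
      using that by (intro sum.cong refl) (simp add: T.gm_Suc)
    finally show ?thesis using P_alt[of x] by (simp add: c_def)
  qed
  have fP: "\<bar>f x - P x\<bar> < \<epsilon>/3" if "x \<in> {a..b}" "x \<le> d" for x
  proof -
    have "min x d = x" using that by simp
    moreover have "\<bar>f1 x - P x\<bar> < \<epsilon>/3" using bqM that(1) unfolding P_def by auto
    ultimately show ?thesis by (simp add: f1_def)
  qed

  obtain \<delta>f where df: "\<delta>f > 0" "\<forall>x\<in>{a..b}. \<forall>y\<in>{a..b}. \<bar>g x - g y\<bar> < \<delta>f \<longrightarrow> \<bar>f x - f y\<bar> < \<epsilon>/3"
    using f e3 unfolding UCr_def by blast
  have cd: "continuous (at d within {a..b}) gt" using cont_d by (simp add: gt_eq)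
  obtain \<delta>0 where d0: "\<delta>0 > 0" "\<forall>y\<in>{a..b}. dist y d < \<delta>0 \<longrightarrow> dist (gt y) (gt d) < \<delta>f"
    using cd df(1) unfolding continuous_within_eps_delta by blast
  define d' where "d' = min b (d + \<delta>0/2)"
  have d': "d < d'" "d' \<le> b" "d' - d < \<delta>0" using d_in d0(1) by (auto simp: d'_def)
  define f2 where "f2 x = f (max x d')" for x
  have f2uc: "\<exists>\<delta>>0. \<forall>x\<in>{d..b}. \<forall>y\<in>{d..b}. \<bar>gt x - gt y\<bar> < \<delta> \<longrightarrow> \<bar>f2 x - f2 y\<bar> < e" if e: "e > 0" for e
  proof -
    obtain \<delta> where dl: "\<delta> > 0" "\<forall>x\<in>{a..b}. \<forall>y\<in>{a..b}. \<bar>g x - g y\<bar> < \<delta> \<longrightarrow> \<bar>f x - f y\<bar> < e"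
      using f e unfolding UCr_def by blast
    show ?thesis
    proof (intro exI conjI ballI impI)
      fix x y assume x: "x \<in> {d..b}" and y: "y \<in> {d..b}" and xy: "\<bar>gt x - gt y\<bar> < \<delta>"
      have mx: "max x d' \<in> {a..b}" "max y d' \<in> {a..b}" using x y d' d_in by auto
      have "\<bar>gt (max x d') - gt (max y d')\<bar> \<le> \<bar>gt x - gt y\<bar>"
        by (rule max_contract[of "{a..b}"]) (use gtm x y d' d_in in auto)
      moreover have "g (max x d') = gt (max x d') + J" "g (max y d') = gt (max y d') + J"
        using d' by (auto intro!: g_gt)
      ultimately have "\<bar>g (max x d') - g (max y d')\<bar> < \<delta>" using xy by simp
      then show "\<bar>f2 x - f2 y\<bar> < e" using dl(2) mx unfolding f2_def by blast
    qed (rule dl(1))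
  qed
  have "\<exists>F. continuous_on {gt d..gt b} F \<and> (\<forall>x\<in>{d..b}. f2 x = F (gt x))"
    by (rule factor_gen[OF gtc]) (use d_in gtm f2uc in auto)
  then obtain F2 where F2: "continuous_on {gt d..gt b} F2" "\<And>x. x \<in> {d..b} \<Longrightarrow> f2 x = F2 (gt x)"
    by blast
  define cl where "cl s = max s0 (min s1 s)" for s
  define Tf where "Tf s = F2 (cl s)" for s
  have cl_in: "cl s \<in> {s0..s1}" for s using s01 by (auto simp: cl_def)
  have cl_id: "cl s = s" if "s \<in> {s0..s1}" for s using that by (auto simp: cl_def)
  have clc: "continuous_on UNIV cl" unfolding cl_def by (intro continuous_intros)
  have Tfc: "continuous_on UNIV Tf" unfolding Tf_def
    by (rule continuous_on_compose2[OF F2(1) clc]) (use cl_in in \<open>auto simp: s0_def s1_def\<close>)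
  have gx_in: "gt x \<in> {s0..s1}" if "x \<in> {d..b}" for x
    using that d_in gtm unfolding s0_def s1_def by auto
  have fT: "\<bar>f x - Tf (gt x)\<bar> < \<epsilon>/3" if x: "x \<in> {a..b}" "d < x" for x
  proof -
    have Tx: "Tf (gt x) = f2 x" unfolding Tf_def using cl_id[OF gx_in] F2(2)[of x] x by auto
    show ?thesis
    proof (cases "d' \<le> x")
      case True then show ?thesis using Tx e3 by (simp add: f2_def max_def)
    next
      case False
      have "gt d \<le> gt x" "gt x \<le> gt d'" using x False d' d_in by (auto intro!: gtm)
      moreover have "dist (gt d') (gt d) < \<delta>f" using d0(2) d' d_in by (auto simp: dist_real_def)
      ultimately have "\<bar>gt x - gt d'\<bar> < \<delta>f" by (simp add: dist_real_def)
      moreover have "g x = gt x + J" "g d' = gt d' + J" using x d' by (auto intro!: g_gt)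
      ultimately have "\<bar>g x - g d'\<bar> < \<delta>f" by simp
      then have "\<bar>f x - f d'\<bar> < \<epsilon>/3" using df(2) x d' d_in by auto
      moreover have "f2 x = f d'" using False by (simp add: f2_def max_def)
      ultimately show ?thesis using Tx by simp
    qed
  qed

  define R where "R = Tf s0 - c - T.V H1 d - J * H1 d"
  define k where "k = \<epsilon> * J / (3 * (\<bar>R\<bar> + 1))"
  have k: "k > 0" using eps Jpos by (simp add: k_def)
  define \<rho> where "\<rho> t = rmp k (T.G t)" for t
  have \<rho>_eq: "\<rho> = (\<lambda>t. rmp k (T.G t))" by (simp add: \<rho>_def fun_eq_iff)
  have \<rho>m[measurable]: "\<rho> \<in> borel_measurable borel" unfolding \<rho>_def by measurable
  define m where "m = T.V \<rho> d"
  have m: "0 \<le> m" "m \<le> k" unfolding m_def \<rho>_def using rmp_int[OF k, of d] d_in by auto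
  define \<beta> where "\<beta> = R / (J + m)"
  have Jm: "J + m > 0" using Jpos m by simp
  have \<beta>bd: "\<bar>\<beta>\<bar> * k < \<epsilon>/3"
  proof -
    have "\<bar>\<beta>\<bar> = \<bar>R\<bar> / (J + m)" using Jm by (simp add: \<beta>_def abs_divide)
    also have "\<dots> \<le> \<bar>R\<bar> / J" using Jpos m by (intro divide_left_mono) auto
    finally have b1: "\<bar>\<beta>\<bar> \<le> \<bar>R\<bar> / J" .
    have "\<bar>\<beta>\<bar> * k \<le> \<bar>R\<bar> / J * k" using b1 k by (intro mult_right_mono) auto
    also have "\<bar>R\<bar> / J * k = \<epsilon> / 3 * (\<bar>R\<bar> / (\<bar>R\<bar> + 1))" using Jpos by (simp add: k_def field_simps)
    also have "\<dots> < \<epsilon> / 3" using e3 by (simp add: field_simps)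
    finally show ?thesis .
  qed
  define C where "C = c + T.V H1 d + \<beta> * m"
  have match: "J * (H1 d + \<beta>) = Tf s0 - C"
  proof -
    have "\<beta> * (J + m) = R" using Jm by (simp add: \<beta>_def)
    then show ?thesis unfolding C_def R_def by (simp add: algebra_simps)
  qed

  \<comment> \<open>Step D: solving the ODE K + J K' = Tf - C on [s0,s1]\<close>
  define \<phi> where "\<phi> r = exp (r / J) * (Tf r - C) / J" for r
  define K where "K s = exp (- s / J) * integral {s0..s} \<phi>" for s
  define Q where "Q s = (Tf s - C - K s) / J" for s
  have \<phi>c: "continuous_on UNIV \<phi>" unfolding \<phi>_def using Jpos
    by (intro continuous_intros Tfc) auto
  have K0: "K s0 = 0" by (simp add: K_def)
  have Kd: "(K has_real_derivative Q s) (at s within {s0..s1})" if s: "s \<in> {s0..s1}" for s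
  proof -
    have I: "((\<lambda>u. integral {s0..u} \<phi>) has_real_derivative \<phi> s) (at s within {s0..s1})"
      using integral_has_vector_derivative[OF continuous_on_subset[OF \<phi>c] s]
      by (simp add: has_real_derivative_iff_has_vector_derivative)
    have "(K has_real_derivative (exp (- s / J) * (- 1 / J)) * integral {s0..s} \<phi> + exp (- s / J) * \<phi> s)
        (at s within {s0..s1})"
      unfolding K_def using Jpos by (auto intro!: derivative_eq_intros I)
    moreover have "(exp (- s / J) * (- 1 / J)) * integral {s0..s} \<phi> + exp (- s / J) * \<phi> s = Q s"
    proof -
      have "exp (- s / J) * exp (s / J) = 1" by (simp add: exp_minus_inverse[symmetric] exp_add[symmetric])
      then show ?thesis unfolding Q_def K_def \<phi>_def using Jpos by (simp add: field_simps)
    qed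
    ultimately show ?thesis by simp
  qed
  have Kc: "continuous_on {s0..s1} K"
    unfolding continuous_on_eq_continuous_within using Kd by (blast intro: DERIV_continuous)
  have Qc: "continuous_on {s0..s1} Q" unfolding Q_def using Jpos
    by (intro continuous_intros Kc continuous_on_subset[OF Tfc]) auto
  define Qe where "Qe s = Q (cl s)" for s
  have Qec: "continuous_on UNIV Qe" unfolding Qe_def
    by (rule continuous_on_compose2[OF Qc clc]) (use cl_in in auto)
  have Qem[measurable]: "Qe \<in> borel_measurable borel" using Qec by (rule borel_measurable_continuous_onI)
  have Qe_id: "Qe s = Q s" if "s \<in> {s0..s1}" for s using cl_id[OF that] by (simp add: Qe_def)
  have s0_in: "s0 \<in> {s0..s1}" using s01 by simp
  have matchH: "Q s0 = H1 d + \<beta>"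
  proof -
    have "J * Q s0 = Tf s0 - C" using Jpos K0 by (simp add: Q_def)
    then have "J * Q s0 = J * (H1 d + \<beta>)" using match by simp
    then show ?thesis using Jpos by simp
  qed
  have "bounded (Q ` {s0..s1})" by (rule compact_imp_bounded[OF compact_continuous_image[OF Qc compact_Icc]])
  then obtain BQ where "\<forall>y\<in>Q ` {s0..s1}. norm y \<le> BQ" unfolding bounded_iff by blast
  then have BQ: "\<And>s. s \<in> {s0..s1} \<Longrightarrow> \<bar>Q s\<bar> \<le> BQ" by auto

  define H where "H t = (if t \<le> d then H1 t + \<beta> * \<rho> t else Qe (T.G t))" for t
  have Hm: "H \<in> borel_measurable borel" unfolding H_def by measurable
  have HB: "\<bar>H t\<bar> \<le> B1 + \<bar>\<beta>\<bar> + BQ" for t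
  proof (cases "t \<le> d")
    case True
    have "\<bar>\<rho> t\<bar> \<le> 1" using rmp_01[of k "T.G t"] by (simp add: \<rho>_def)
    then have "\<bar>\<beta> * \<rho> t\<bar> \<le> \<bar>\<beta>\<bar>" by (simp add: abs_mult mult_left_le)
    moreover have "0 \<le> BQ" using BQ[OF s0_in] by simp
    ultimately show ?thesis using True B1[of t] abs_triangle_ineq[of "H1 t" "\<beta> * \<rho> t"] by (simp add: H_def)
  next
    case False
    have "\<bar>Qe (T.G t)\<bar> \<le> BQ" unfolding Qe_def using BQ cl_in by blast
    moreover have "0 \<le> B1" using B1[of t] by simp
    ultimately show ?thesis using False by (simp add: H_def)
  qed
  have H_left: "H t = H1 t + \<beta> * rmp k (gt t)" if "t \<in> {a..d}" for t
    using that d_in by (simp add: H_def \<rho>_def gtG)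
  have H_right: "H t = Q (gt t)" if "t \<in> {d..b}" for t
  proof (cases "t = d")
    case True
    have "H t = H1 d + \<beta>" using True k d_in by (simp add: H_def \<rho>_def gtG rmp_top)
    then show ?thesis using True matchH by (simp add: s0_def)
  next
    case False
    then show ?thesis using that gx_in[OF that] d_in by (simp add: H_def gtG Qe_id)
  qed
  have Huc: "T.UCr H"
  proof (rule T.uc_glue[of d])
    show "a \<le> d" "d \<le> b" using d_in by auto
  next
    fix e :: real assume e: "e > 0"
    define L where "L = \<bar>C1\<bar> + \<bar>\<beta>\<bar> / k + 1"
    have "0 \<le> \<bar>\<beta>\<bar> / k" using k by simp
    then have L: "L > 0" unfolding L_def using abs_ge_zero[of C1] by linarith
    show "\<exists>\<delta>>0. \<forall>x\<in>{a..d}. \<forall>y\<in>{a..d}. \<bar>gt x - gt y\<bar> < \<delta> \<longrightarrow> \<bar>H x - H y\<bar> < e"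
    proof (intro exI conjI ballI impI)
      show "e / L > 0" using e L by simp
      fix x y assume x: "x \<in> {a..d}" and y: "y \<in> {a..d}" and xy: "\<bar>gt x - gt y\<bar> < e / L"
      have xb: "x \<in> {a..b}" "y \<in> {a..b}" using x y d_in by auto
      have "\<bar>H x - H y\<bar> = \<bar>(H1 x - H1 y) + \<beta> * (rmp k (gt x) - rmp k (gt y))\<bar>"
        using H_left[OF x] H_left[OF y] by (simp add: algebra_simps)
      also have "\<dots> \<le> \<bar>H1 x - H1 y\<bar> + \<bar>\<beta>\<bar> * \<bar>rmp k (gt x) - rmp k (gt y)\<bar>"
        using abs_triangle_ineq[of "H1 x - H1 y" "\<beta> * (rmp k (gt x) - rmp k (gt y))"] by (simp add: abs_mult)
      also have "\<dots> \<le> \<bar>C1\<bar> * \<bar>gt x - gt y\<bar> + \<bar>\<beta>\<bar> * (\<bar>gt x - gt y\<bar> / k)"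
        by (intro add_mono H1lip[OF xb] mult_left_mono rmp_lip[OF k]) auto
      also have "\<dots> \<le> L * \<bar>gt x - gt y\<bar>" unfolding L_def by (simp add: algebra_simps)
      also have "\<dots> < L * (e / L)" using xy L by (intro mult_strict_left_mono) auto
      also have "\<dots> = e" using L by simp
      finally show "\<bar>H x - H y\<bar> < e" .
    qed
  next
    fix e :: real assume e: "e > 0"
    have "uniformly_continuous_on {s0..s1} Q" by (rule compact_uniformly_continuous[OF Qc compact_Icc])
    then obtain \<delta> where dl: "\<delta> > 0" "\<forall>u\<in>{s0..s1}. \<forall>v\<in>{s0..s1}. dist v u < \<delta> \<longrightarrow> dist (Q v) (Q u) < e"
      using e unfolding uniformly_continuous_on_def by blast
    show "\<exists>\<delta>>0. \<forall>x\<in>{d..b}. \<forall>y\<in>{d..b}. \<bar>gt x - gt y\<bar> < \<delta> \<longrightarrow> \<bar>H x - H y\<bar> < e"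
    proof (intro exI conjI ballI impI)
      fix x y assume x: "x \<in> {d..b}" and y: "y \<in> {d..b}" and xy: "\<bar>gt x - gt y\<bar> < \<delta>"
      have "dist (Q (gt x)) (Q (gt y)) < e" using dl(2) gx_in[OF x] gx_in[OF y] xy by (auto simp: dist_real_def)
      then show "\<bar>H x - H y\<bar> < e" using H_right[OF x] H_right[OF y] by (simp add: dist_real_def)
    qed (rule dl(1))
  qed
  have ap: "approx (\<lambda>x. c + T.V H x + (if d < x then J * H x else 0))"
    by (rule transfer[OF Hm HB IH[OF Huc]])

  have \<rho>b: "\<And>t. \<bar>\<rho> t\<bar> \<le> 1" using rmp_01 by (simp add: \<rho>_def abs_le_iff)
  have VHle: "T.V H y = T.V H1 y + \<beta> * T.V \<rho> y" if "y \<le> d" for y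
  proof -
    have i1: "integrable T.mu (\<lambda>t. indicator {a..<y} t * H1 t)" by (rule T.mint[OF H1m _ B1]) auto
    have i2: "integrable T.mu (\<lambda>t. \<beta> * (indicator {a..<y} t * \<rho> t))"
      by (intro integrable_mult_right T.mint[OF \<rho>m _ \<rho>b]) auto
    have "T.V H y = (\<integral>t. indicator {a..<y} t * H1 t + \<beta> * (indicator {a..<y} t * \<rho> t) \<partial>T.mu)"
      unfolding T.V_def using that
      by (intro Bochner_Integration.integral_cong refl) (auto simp: H_def indicator_def)
    also have "\<dots> = T.V H1 y + \<beta> * T.V \<rho> y"
      unfolding T.V_def by (simp add: Bochner_Integration.integral_add[OF i1 i2])
    finally show ?thesis .
  qed
  show "\<exists>\<phi>. approx \<phi> \<and> (\<forall>x\<in>{a..b}. \<bar>f x - \<phi> x\<bar> < \<epsilon>)"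
  proof (intro exI conjI ballI)
    show "approx (\<lambda>x. c + T.V H x + (if d < x then J * H x else 0))" by (rule ap)
    fix x assume x: "x \<in> {a..b}"
    show "\<bar>f x - (c + T.V H x + (if d < x then J * H x else 0))\<bar> < \<epsilon>"
    proof (cases "d < x")
      case False
      have Vr: "0 \<le> T.V \<rho> x" "T.V \<rho> x \<le> k" using rmp_int[OF k, of x] x False unfolding \<rho>_eq by auto
      have "\<bar>\<beta> * T.V \<rho> x\<bar> \<le> \<bar>\<beta>\<bar> * k" using Vr by (simp add: abs_mult mult_left_mono)
      then have b3: "\<bar>\<beta> * T.V \<rho> x\<bar> < \<epsilon>/3" using \<beta>bd by linarith
      have "c + T.V H x = P x + \<beta> * T.V \<rho> x" using VHle[of x] VH1[of x] False x by simp
      then have "\<bar>f x - (c + T.V H x + (if d < x then J * H x else 0))\<bar> = \<bar>(f x - P x) - \<beta> * T.V \<rho> x\<bar>"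
        using False by simp
      also have "\<dots> \<le> \<bar>f x - P x\<bar> + \<bar>\<beta> * T.V \<rho> x\<bar>" by (rule abs_triangle_ineq4)
      finally show ?thesis using fP[of x] x False b3 by linarith
    next
      case True
      have xd: "x \<in> {d..b}" using True x by auto
      have VHd: "T.V H d = T.V H1 d + \<beta> * m" using VHle[of d] by (simp add: m_def)
      have "T.V H x - T.V H d = (\<integral>t. indicator {d..<x} t * H t \<partial>T.mu)"
        by (rule T.V_diff[OF Hm HB]) (use d_in True in auto)
      also have "\<dots> = (\<integral>t. indicator {d..<x} t * Qe (T.G t) \<partial>T.mu)"
      proof (intro Bochner_Integration.integral_cong refl)
        fix t
        show "indicator {d..<x} t * H t = indicator {d..<x} t * Qe (T.G t)"
        proof (cases "t \<in> {d..<x}")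
          case True
          then have t: "t \<in> {d..b}" using x by auto
          then show ?thesis using H_right[OF t] Qe_id[OF gx_in[OF t]] d_in t by (simp add: gtG)
        qed simp
      qed
      also have "\<dots> = K (T.G x) - K (T.G d)"
      proof (rule T.CV)
        show "continuous_on {d..x} gt" using gtc by (rule continuous_on_subset) (use xd in auto)
        show "continuous_on UNIV Qe" by (rule Qec)
        fix s assume s: "s \<in> {T.G d..T.G x}"
        have sub: "{T.G d..T.G x} \<subseteq> {s0..s1}" using gx_in[OF xd] d_in x by (auto simp: gtG s0_def)
        have "(K has_real_derivative Q s) (at s within {T.G d..T.G x})"
          using Kd[of s] s sub by (blast intro: DERIV_subset)
        then show "(K has_real_derivative Qe s) (at s within {T.G d..T.G x})"
          using Qe_id[of s] s sub by auto
      qed (use d_in True x in auto)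
      finally have "T.V H x = T.V H d + K (gt x)" using K0 d_in x by (simp add: gtG s0_def)
      then have "c + T.V H x + J * H x = C + K (gt x) + J * Q (gt x)"
        using VHd H_right[OF xd] by (simp add: C_def)
      also have "\<dots> = Tf (gt x)" using Jpos by (simp add: Q_def)
      finally have "\<bar>f x - (c + T.V H x + (if d < x then J * H x else 0))\<bar> = \<bar>f x - Tf (gt x)\<bar>"
        using True by simp
      then show ?thesis using fT[OF x True] by linarith
    qed
  qed
qed

end



definition disc :: "real \<Rightarrow> real \<Rightarrow> (real \<Rightarrow> real) \<Rightarrow> real set" where
  "disc a b g = {x \<in> {a..b}. \<not> continuous (at x within {a..b}) g}"

lemma claim:
  "\<forall>g. derivator a b g \<longrightarrow> a \<le> b \<longrightarrow> finite (disc a b g) \<longrightarrow> card (disc a b g) = n \<longrightarrow>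
     (\<forall>f. LSd.UCr a b g f \<longrightarrow> LSd.approx a b g f)"
proof (induction n)
  case 0
  show ?case
  proof (intro allI impI)
    fix g f assume g: "derivator a b g" "a \<le> b" "finite (disc a b g)" "card (disc a b g) = 0"
      and f: "LSd.UCr a b g f"
    interpret LSd a b g using g by unfold_locales
    have "disc a b g = {}" using g by simp
    then have "continuous_on {a..b} g" unfolding continuous_on_eq_continuous_within disc_def by auto
    then show "approx f" using base f by blast
  qed
next
  case (Suc n)
  show ?case
  proof (intro allI impI)
    fix g f assume g: "derivator a b g" "a \<le> b" "finite (disc a b g)" "card (disc a b g) = Suc n"
      and f: "LSd.UCr a b g f"
    interpret LSd a b g using g by unfold_locales
    have ne: "disc a b g \<noteq> {}" using g by auto
    define d where "d = Max (disc a b g)"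
    have dD: "d \<in> disc a b g" unfolding d_def using g(3) ne by (rule Max_in)
    have dmax: "x \<le> d" if "x \<in> disc a b g" for x unfolding d_def using g(3) that by (rule Max_ge)
    have "continuous (at b within {a..b}) g" using g(1,2) by (auto simp: derivator_def)
    then have bnot: "b \<notin> disc a b g" by (simp add: disc_def)
    have d_in: "a \<le> d" "d < b" using dD bnot by (auto simp: disc_def less_le)
    interpret J: LSj a b g d by unfold_locales (use d_in in auto)
    have discT: "disc a b J.gt = disc a b g - {d}" using J.disc_gt by (simp add: disc_def)
    have IH: "\<forall>f. J.T.UCr f \<longrightarrow> J.T.approx f"
      using Suc.IH J.gt_derivator g discT dD by auto
    have contR: "continuous (at x within {a..b}) g" if "x \<in> {d<..b}" for x
    proof (rule ccontr)
      assume "\<not> continuous (at x within {a..b}) g"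
      then have "x \<in> disc a b g" using that d_in by (auto simp: disc_def)
      then show False using dmax[of x] that by auto
    qed
    have Jpos: "0 < J.J" using J.J_pos dD by (simp add: disc_def)
    show "approx f" by (rule J.step[OF contR Jpos _ f]) (use IH in auto)
  qed
qed

lemma claim': assumes "derivator a b g" "a \<le> b" "finite (disc a b g)" "LSd.UCr a b g f"
  shows "LSd.approx a b g f"
  using claim[of a b "card (disc a b g)"] assms by blast




definition clamp01 :: "real \<Rightarrow> real" where "clamp01 r = max 0 (min 1 r)"

definition interpA :: "(nat \<Rightarrow> 'a::real_normed_vector) \<Rightarrow> real \<Rightarrow> real \<Rightarrow> nat \<Rightarrow> real \<Rightarrow> 'a" where
  "interpA y u0 h N s = y 0 + (\<Sum>i<N. clamp01 ((s - (u0 + real i * h)) / h) *\<^sub>R (y (Suc i) - y i))"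

lemma interp_top: assumes h: "h > 0" and s: "u0 + real N * h \<le> s"
  shows "interpA y u0 h N s = y N"
  using s
proof (induction N)
  case 0 then show ?case by (simp add: interpA_def)
next
  case (Suc N)
  have "u0 + real N * h \<le> s" using Suc.prems h by (simp add: algebra_simps)
  then have IH: "interpA y u0 h N s = y N" by (rule Suc.IH)
  have "1 \<le> (s - (u0 + real N * h)) / h" using Suc.prems h by (simp add: field_simps)
  then have c: "clamp01 ((s - (u0 + real N * h)) / h) = 1" by (simp add: clamp01_def)
  have "interpA y u0 h (Suc N) s = interpA y u0 h N s + clamp01 ((s - (u0 + real N * h)) / h) *\<^sub>R (y (Suc N) - y N)"
    by (simp add: interpA_def)
  then show ?case using IH c by simp
qed

lemma interp: assumes h: "h > 0" and s: "u0 \<le> s" "s \<le> u0 + real (Suc N) * h"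
  shows "\<exists>k \<theta>. k \<le> N \<and> u0 + real k * h \<le> s \<and> s \<le> u0 + real (Suc k) * h \<and> 0 \<le> \<theta> \<and> \<theta> \<le> 1 \<and>
     interpA y u0 h (Suc N) s = y k + \<theta> *\<^sub>R (y (Suc k) - y k)"
  using s
proof (induction N)
  case 0
  show ?case
    by (rule exI[of _ 0], rule exI[of _ "clamp01 ((s - u0) / h)"]) (use 0 in \<open>auto simp: interpA_def clamp01_def\<close>)
next
  case (Suc N)
  have step: "interpA y u0 h (Suc (Suc N)) s = interpA y u0 h (Suc N) s +
      clamp01 ((s - (u0 + real (Suc N) * h)) / h) *\<^sub>R (y (Suc (Suc N)) - y (Suc N))"
    by (simp add: interpA_def)
  show ?case
  proof (cases "s \<le> u0 + real (Suc N) * h")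
    case True
    obtain k \<theta> where kt: "k \<le> N" "u0 + real k * h \<le> s" "s \<le> u0 + real (Suc k) * h" "0 \<le> \<theta>" "\<theta> \<le> 1"
      "interpA y u0 h (Suc N) s = y k + \<theta> *\<^sub>R (y (Suc k) - y k)"
      using Suc.IH[OF Suc.prems(1) True] by blast
    have "(s - (u0 + real (Suc N) * h)) / h \<le> 0" using True h by (simp add: divide_nonpos_pos)
    then have "clamp01 ((s - (u0 + real (Suc N) * h)) / h) = 0" by (simp add: clamp01_def)
    then show ?thesis using kt step by (intro exI[of _ k] exI[of _ \<theta>]) auto
  next
    case False
    have top: "interpA y u0 h (Suc N) s = y (Suc N)" by (rule interp_top) (use h False in auto)
    show ?thesis
      by (rule exI[of _ "Suc N"], rule exI[of _ "clamp01 ((s - (u0 + real (Suc N) * h)) / h)"])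
        (use False Suc.prems top step in \<open>auto simp: clamp01_def\<close>)
  qed
qed

context LSd begin

definition PA :: "(real \<Rightarrow> 'a::real_normed_field) set" where
  "PA = {p. \<exists>C M. \<forall>x. p x = (\<Sum>n<M. C n * of_real (gm n x))}"

lemma pad: fixes C :: "nat \<Rightarrow> 'b::comm_ring_1" assumes "M \<le> K"
  shows "(\<Sum>n<M. C n * F n) = (\<Sum>n<K. (if n < M then C n else 0) * F n)"
proof -
  have "(\<Sum>n<K. (if n < M then C n else 0) * F n) = (\<Sum>n\<in>{..<K} \<inter> {n. n < M}. C n * F n)"
    by (subst sum.inter_restrict) (auto intro!: sum.cong)
  also have "{..<K} \<inter> {n. n < M} = {..<M}" using assms by auto
  finally show ?thesis by simp
qed

lemma PA_add: assumes "p \<in> PA" "q \<in> PA" shows "(\<lambda>x. p x + q x) \<in> PA"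
proof -
  obtain C1 M1 where 1: "\<And>x. p x = (\<Sum>n<M1. C1 n * of_real (gm n x))" using assms(1) by (auto simp: PA_def)
  obtain C2 M2 where 2: "\<And>x. q x = (\<Sum>n<M2. C2 n * of_real (gm n x))" using assms(2) by (auto simp: PA_def)
  let ?K = "max M1 M2"
  have "p x + q x = (\<Sum>n<?K. ((if n < M1 then C1 n else 0) + (if n < M2 then C2 n else 0)) * of_real (gm n x))" for x
    unfolding 1 2 pad[of M1 ?K C1, OF max.cobounded1] pad[of M2 ?K C2, OF max.cobounded2]
    by (simp add: sum.distrib distrib_right)
  then show ?thesis unfolding PA_def
    by (intro CollectI exI[of _ "\<lambda>n. (if n < M1 then C1 n else 0) + (if n < M2 then C2 n else 0)"] exI[of _ ?K]) auto
qed

lemma PA_scale: assumes "p \<in> PA" shows "(\<lambda>x. y * p x) \<in> PA"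
proof -
  obtain C M where 1: "\<And>x. p x = (\<Sum>n<M. C n * of_real (gm n x))" using assms by (auto simp: PA_def)
  have "y * p x = (\<Sum>n<M. (y * C n) * of_real (gm n x))" for x
    unfolding 1 by (simp add: sum_distrib_left mult.assoc)
  then show ?thesis unfolding PA_def by (intro CollectI exI[of _ "\<lambda>n. y * C n"] exI[of _ M]) auto
qed

lemma PA_real: "(\<lambda>x. of_real (\<Sum>n<M. c n * gm n x)) \<in> PA"
proof -
  have "of_real (\<Sum>n<M. c n * gm n x) = (\<Sum>n<M. of_real (c n) * (of_real (gm n x) :: 'a))" for x
    by simp
  then show ?thesis unfolding PA_def by (intro CollectI exI[of _ "\<lambda>n. of_real (c n)"] exI[of _ M]) auto
qed

lemma PA_const: "(\<lambda>x. y) \<in> PA"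
proof -
  have "y = (\<Sum>n<1. (\<lambda>_. y) n * of_real (gm n x))" for x by simp
  then show ?thesis unfolding PA_def by (intro CollectI exI[of _ "\<lambda>_. y"] exI[of _ 1]) auto
qed

lemma PA_zero: "(\<lambda>x. 0) \<in> PA"
  unfolding PA_def by (rule CollectI, rule exI[of _ "\<lambda>_. 0"], rule exI[of _ 0]) simp

lemma PA_sum: assumes "finite I" "\<And>i. i \<in> I \<Longrightarrow> p i \<in> PA" shows "(\<lambda>x. \<Sum>i\<in>I. p i x) \<in> PA"
  using assms
proof (induction I rule: finite_induct)
  case empty then show ?case using PA_zero by simp
next
  case (insert i I)
  then have "(\<lambda>x. p i x + (\<Sum>i\<in>I. p i x)) \<in> PA" by (intro PA_add) auto
  then show ?case using insert by simp
qed

lemma PA_gpolys: assumes "p \<in> PA" shows "p \<in> g_polys a b g"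
proof -
  obtain C M where 1: "\<And>x. p x = (\<Sum>n<M. C n * of_real (gm n x))" using assms by (auto simp: PA_def)
  define S where "S = {a} \<times> {..<M}"
  define c where "c = (\<lambda>(x0::real, n). C n)"
  have S: "finite S" "S \<subseteq> {a..b} \<times> UNIV" using ab by (auto simp: S_def)
  have "(\<Sum>(x0, n)\<in>S. c (x0, n) * of_real (g_mono a b g x0 n x)) = (\<Sum>n<M. C n * of_real (gm n x))" for x
  proof -
    have "S = (\<lambda>n. (a, n)) ` {..<M}" by (auto simp: S_def)
    moreover have "inj_on (\<lambda>n. (a, n)) {..<M}" by (auto simp: inj_on_def)
    ultimately show ?thesis by (simp add: sum.reindex c_def)
  qed
  then have "p = (\<lambda>x. \<Sum>(x0, n)\<in>S. c (x0, n) * of_real (g_mono a b g x0 n x))" using 1 by auto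
  then show ?thesis unfolding g_polys_def using S by blast
qed

end



context LSd begin

lemma ramp_UCr: assumes h: "h > 0" shows "UCr (\<lambda>x. clamp01 ((g x - u) / h))"
  unfolding UCr_def
proof (intro allI impI)
  fix e :: real assume e: "e > 0"
  show "\<exists>\<delta>>0. \<forall>x\<in>{a..b}. \<forall>y\<in>{a..b}. \<bar>g x - g y\<bar> < \<delta> \<longrightarrow> \<bar>clamp01 ((g x - u) / h) - clamp01 ((g y - u) / h)\<bar> < e"
  proof (intro exI conjI ballI impI)
    show "e * h > 0" using e h by simp
    fix x y assume xy: "\<bar>g x - g y\<bar> < e * h"
    have "\<bar>clamp01 ((g x - u) / h) - clamp01 ((g y - u) / h)\<bar> \<le> \<bar>(g x - u) / h - (g y - u) / h\<bar>"
      unfolding clamp01_def by (rule clamp01_lip)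
    also have "(g x - u) / h - (g y - u) / h = (g x - g y) / h" by (simp add: diff_divide_distrib)
    also have "\<bar>(g x - g y) / h\<bar> = \<bar>g x - g y\<bar> / h" using h by (simp add: abs_divide)
    also have "\<dots> < e" using xy h by (simp add: divide_less_eq)
    finally show "\<bar>clamp01 ((g x - u) / h) - clamp01 ((g y - u) / h)\<bar> < e" .
  qed
qed

lemma approxA:
  assumes main: "\<And>f. UCr f \<Longrightarrow> approx f"
    and f: "f \<in> (UC_g a b g :: (real \<Rightarrow> 'a::real_normed_field) set)" and e: "\<epsilon> > 0"
  shows "\<exists>p\<in>PA. \<forall>x\<in>{a..b}. norm (f x - p x) < \<epsilon>"
proof -
  have e2: "\<epsilon>/2 > 0" using e by simp
  obtain \<delta> where dl: "\<delta> > 0" "\<forall>x\<in>{a..b}. \<forall>y\<in>{a..b}. \<bar>g x - g y\<bar> < \<delta> \<longrightarrow> norm (f x - f y) < \<epsilon>/2"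
    using f e2 unfolding UC_g_def by blast
  define h where "h = \<delta> / 4"
  have h: "h > 0" using dl by (simp add: h_def)
  define u0 where "u0 = g a"
  define N where "N = nat \<lceil>(g b - g a) / h\<rceil>"
  have Nb: "g b \<le> u0 + real (Suc N) * h"
  proof -
    have "(g b - g a) / h \<le> real N" unfolding N_def by linarith
    then have "g b - g a \<le> real N * h" using h by (simp add: field_simps)
    then show ?thesis using h by (simp add: u0_def algebra_simps)
  qed
  define ok where "ok i \<longleftrightarrow> (\<exists>x. x \<in> {a..b} \<and> \<bar>g x - (u0 + real i * h)\<bar> \<le> h)" for i
  define \<xi> where "\<xi> i = (SOME x. x \<in> {a..b} \<and> \<bar>g x - (u0 + real i * h)\<bar> \<le> h)" for i
  define y where "y i = (if ok i then f (\<xi> i) else 0)" for i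
  have yclose: "norm (f x - y i) < \<epsilon>/2" if x: "x \<in> {a..b}" "\<bar>g x - (u0 + real i * h)\<bar> \<le> h" for x i
  proof -
    have ok: "ok i" using x unfolding ok_def by blast
    have \<xi>: "\<xi> i \<in> {a..b} \<and> \<bar>g (\<xi> i) - (u0 + real i * h)\<bar> \<le> h"
      unfolding \<xi>_def by (rule someI[of _ x]) (use x in auto)
    have "\<bar>g x - g (\<xi> i)\<bar> \<le> 2 * h" using x \<xi> by linarith
    then have "\<bar>g x - g (\<xi> i)\<bar> < \<delta>" using h unfolding h_def by linarith
    then show ?thesis using dl(2) x(1) \<xi> ok by (simp add: y_def)
  qed
  define r where "r i x = clamp01 ((g x - (u0 + real i * h)) / h)" for i x
  have rA: "approx (r i)" for i unfolding r_def by (rule main[OF ramp_UCr[OF h]])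
  define S where "S = (\<Sum>i<Suc N. norm (y (Suc i) - y i))"
  have S0: "0 \<le> S" unfolding S_def by (intro sum_nonneg) auto
  define \<eta> where "\<eta> = \<epsilon> / (2 * (S + 1))"
  have eta: "\<eta> > 0" using e S0 by (simp add: \<eta>_def)
  have Seta: "S * \<eta> < \<epsilon>/2"
  proof -
    have "S * \<eta> = \<epsilon>/2 * (S / (S + 1))" using S0 by (simp add: \<eta>_def field_simps)
    also have "\<dots> < \<epsilon>/2" using S0 e by (simp add: field_simps)
    finally show ?thesis .
  qed
  have "\<forall>i. \<exists>c M. \<forall>x\<in>{a..b}. \<bar>r i x - (\<Sum>n<M. c n * gm n x)\<bar> < \<eta>"
    using rA eta unfolding approx_def by blast
  then obtain cf Mf where cf: "\<And>i x. x \<in> {a..b} \<Longrightarrow> \<bar>r i x - (\<Sum>n<Mf i. cf i n * gm n x)\<bar> < \<eta>"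
    by metis
  define P where "P i x = (\<Sum>n<Mf i. cf i n * gm n x)" for i x
  define p where "p x = y 0 + (\<Sum>i<Suc N. (y (Suc i) - y i) * of_real (P i x))" for x
  have pPA: "p \<in> PA" unfolding p_def P_def
    by (intro PA_add PA_const PA_sum PA_scale PA_real) auto
  show ?thesis
  proof (intro bexI[OF _ pPA] ballI)
    fix x assume x: "x \<in> {a..b}"
    have s: "u0 \<le> g x" "g x \<le> u0 + real (Suc N) * h"
      using x g_mono_le[of a x] g_mono_le[of x b] ab Nb by (auto simp: u0_def)
    obtain k \<theta> where kt: "k \<le> N" "u0 + real k * h \<le> g x" "g x \<le> u0 + real (Suc k) * h" "0 \<le> \<theta>" "\<theta> \<le> 1"
        "interpA y u0 h (Suc N) (g x) = y k + \<theta> *\<^sub>R (y (Suc k) - y k)"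
      using interp[OF h s, of y] by blast
    have A: "interpA y u0 h (Suc N) (g x) = y 0 + (\<Sum>i<Suc N. (y (Suc i) - y i) * of_real (r i x))"
      unfolding interpA_def r_def by (simp add: scaleR_conv_of_real mult.commute)
    have sk: "u0 + real (Suc k) * h = u0 + real k * h + h" by (simp add: algebra_simps)
    have c1: "norm (f x - y k) < \<epsilon>/2"
      by (rule yclose[OF x]) (use kt(2,3) sk h in \<open>simp add: abs_le_iff\<close>)
    have c2: "norm (f x - y (Suc k)) < \<epsilon>/2"
      by (rule yclose[OF x]) (use kt(2,3) sk h in \<open>simp add: abs_le_iff\<close>)
    have "f x - interpA y u0 h (Suc N) (g x) = (1 - \<theta>) *\<^sub>R (f x - y k) + \<theta> *\<^sub>R (f x - y (Suc k))"
      using kt(6) by (simp add: algebra_simps)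
    also have "norm \<dots> \<le> norm ((1 - \<theta>) *\<^sub>R (f x - y k)) + norm (\<theta> *\<^sub>R (f x - y (Suc k)))"
      by (rule norm_triangle_ineq)
    also have "\<dots> = (1 - \<theta>) * norm (f x - y k) + \<theta> * norm (f x - y (Suc k))"
      using kt(4,5) by simp
    also have "\<dots> \<le> (1 - \<theta>) * (\<epsilon>/2) + \<theta> * (\<epsilon>/2)"
      using c1 c2 kt(4,5) by (intro add_mono mult_left_mono) auto
    also have "\<dots> = \<epsilon>/2" by (simp add: field_simps)
    finally have e1: "norm (f x - interpA y u0 h (Suc N) (g x)) \<le> \<epsilon>/2" .
    have "interpA y u0 h (Suc N) (g x) - p x =
        (\<Sum>i<Suc N. (y (Suc i) - y i) * of_real (r i x) - (y (Suc i) - y i) * of_real (P i x))"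
      unfolding A p_def by (simp add: sum_subtractf)
    also have "\<dots> = (\<Sum>i<Suc N. (y (Suc i) - y i) * of_real (r i x - P i x))"
      by (intro sum.cong refl) (simp add: right_diff_distrib)
    also have "norm \<dots> \<le> (\<Sum>i<Suc N. norm (y (Suc i) - y i) * \<eta>)"
    proof -
      have "norm (\<Sum>i<Suc N. (y (Suc i) - y i) * of_real (r i x - P i x)) \<le>
          (\<Sum>i<Suc N. norm ((y (Suc i) - y i) * of_real (r i x - P i x)))" by (rule norm_sum)
      also have "\<dots> \<le> (\<Sum>i<Suc N. norm (y (Suc i) - y i) * \<eta>)"
      proof (intro sum_mono)
        fix i
        have "\<bar>r i x - P i x\<bar> \<le> \<eta>" using cf[OF x, of i] unfolding P_def by simp
        moreover have "norm ((y (Suc i) - y i) * of_real (r i x - P i x)) = norm (y (Suc i) - y i) * \<bar>r i x - P i x\<bar>"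
          by (simp add: norm_mult del: of_real_diff)
        ultimately show "norm ((y (Suc i) - y i) * of_real (r i x - P i x)) \<le> norm (y (Suc i) - y i) * \<eta>"
          by (simp add: mult_left_mono)
      qed
      finally show ?thesis .
    qed
    also have "\<dots> = S * \<eta>" unfolding S_def by (rule sum_distrib_right[symmetric])
    finally have e3: "norm (interpA y u0 h (Suc N) (g x) - p x) < \<epsilon>/2" using Seta by linarith
    have "f x - p x = (f x - interpA y u0 h (Suc N) (g x)) + (interpA y u0 h (Suc N) (g x) - p x)" by simp
    then have "norm (f x - p x) \<le> norm (f x - interpA y u0 h (Suc N) (g x)) + norm (interpA y u0 h (Suc N) (g x) - p x)"
      by (metis norm_triangle_ineq)
    then show "norm (f x - p x) < \<epsilon>" using e1 e3 by linarith
  qed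
qed

end

theorem mainTheorem15:
  fixes a b :: real and g :: "real \<Rightarrow> real"
  assumes "derivator a b g"
    and "finite {x \<in> {a..b}. \<not> continuous (at x within {a..b}) g}"
  shows "\<forall>f \<in> (UC_g a b g :: (real \<Rightarrow> 'a::real_normed_field) set). \<forall>\<epsilon>>0.
           \<exists>p \<in> g_polys a b g. \<forall>x\<in>{a..b}. norm (f x - p x) < \<epsilon>"
proof (intro ballI allI impI)
  fix f :: "real \<Rightarrow> 'a" and \<epsilon> :: real
  assume f: "f \<in> UC_g a b g" and e: "\<epsilon> > 0"
  show "\<exists>p \<in> g_polys a b g. \<forall>x\<in>{a..b}. norm (f x - p x) < \<epsilon>"
  proof (cases "a \<le> b")
    case False
    have "(\<lambda>x. 0 :: 'a) \<in> g_polys a b g"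
      unfolding g_polys_def by (rule CollectI, rule exI[of _ "{}"]) auto
    then show ?thesis using False by auto
  next
    case True
    interpret LSd a b g using assms(1) True by unfold_locales
    have main: "UCr h \<Longrightarrow> approx h" for h
      using claim'[OF assms(1) True, of h] assms(2) by (simp add: disc_def)
    obtain p where "p \<in> PA" "\<forall>x\<in>{a..b}. norm (f x - p x) < \<epsilon>" using approxA[OF main f e] by blast
    then show ?thesis using PA_gpolys by blast
  qed
qed



end
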